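(* Let $(G,\lambda)$ be a matching problem, $G=(V,E)$ a finite simple graph and $\lambda\in\mathbb{R}_{>0}^n$, and consider the condition (C): $\sum_{i\in V(\mathcal{I})}\lambda_i>\frac12\sum_{i\in V}\lambda_i$ for every independent set $\mathcal{I}$ of $G$, where $V(\mathcal{I})=\bigcup_{i\in\mathcal{I}}V_i$. If either (i) $G$ is a complete graph with $n\ge3$ nodes, or (ii) $G$ is the diamond graph ($V=\{1,2,3,4\}$, $E=\{\{1,2\},\{1,3\},\{2,3\},\{2,4\},\{3,4\}\}$), then stabilizability of $(G,\lambda)$ implies (C), and therefore $(G,\lambda,\Phi)$ is stable for every greedy policy $\Phi$ adapted to $G$. If either (iii) $G$ has diameter at least $3$, or (iv) $G$ contains a node of degree $1$, then (C) is never satisfied.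
   Context: $V_i$ is the set of neighbours of $i$; an independent set is a non-empty set of pairwise non-adjacent nodes. Matching model: classes arrive as independent Poisson processes of rates $\lambda_i$; classes $i,j$ matchable iff $\{i,j\}\in E$; unmatched items wait. A policy adapted to $G$: countable state space with queue-size map $|\cdot|$ and unique empty state, probabilities $\Phi(s,i,j,s')$ of matching an arriving class-$i$ item with a waiting neighbour class $j$ or leaving it unmatched ($j=\bot$), new state consistent with queue sizes, irreducible state chain from the empty state. Greedy: no arriving item is left unmatched while a compatible item is waiting. Stable: the state chain is positive recurrent; $(G,\lambda)$ is stabilizable if some policy makes it stable. *)

theory Defs
  imports "HOL-Probability.Probability" "HOL-Library.Extended_Nat"
begin

definition simple_graph :: "nat \<Rightarrow> nat set set \<Rightarrow> bool" where
  "simple_graph n E \<longleftrightarrow>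
     (\<forall>e\<in>E. \<exists>i j. e = {i, j} \<and> i \<noteq> j \<and> i \<in> {1..n} \<and> j \<in> {1..n})"

definition nbrs :: "nat set set \<Rightarrow> nat \<Rightarrow> nat set" where
  "nbrs E i = {j. {i, j} \<in> E}"

definition independent_set :: "nat \<Rightarrow> nat set set \<Rightarrow> nat set \<Rightarrow> bool" where
  "independent_set n E I \<longleftrightarrow> I \<noteq> {} \<and> I \<subseteq> {1..n} \<and>
     (\<forall>i\<in>I. \<forall>j\<in>I. {i, j} \<notin> E)"

definition nbr_set :: "nat set set \<Rightarrow> nat set \<Rightarrow> nat set" where
  "nbr_set E I = (\<Union>i\<in>I. nbrs E i)"

definition condC :: "nat \<Rightarrow> nat set set \<Rightarrow> (nat \<Rightarrow> real) \<Rightarrow> bool" where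
  "condC n E lam \<longleftrightarrow> (\<forall>I. independent_set n E I \<longrightarrow>
      (\<Sum>i\<in>nbr_set E I. lam i) > (\<Sum>i\<in>{1..n}. lam i) / 2)"

definition complete_graph :: "nat \<Rightarrow> nat set set \<Rightarrow> bool" where
  "complete_graph n E \<longleftrightarrow> E = {{i, j} | i j. i \<in> {1..n} \<and> j \<in> {1..n} \<and> i \<noteq> j}"

definition diamond_graph :: "nat \<Rightarrow> nat set set \<Rightarrow> bool" where
  "diamond_graph n E \<longleftrightarrow> n = 4 \<and> E = {{1,2},{1,3},{2,3},{2,4},{3,4}}"

definition walk :: "nat set set \<Rightarrow> nat \<Rightarrow> nat \<Rightarrow> nat \<Rightarrow> bool" where
  "walk E u v k \<longleftrightarrow> (\<exists>p :: nat \<Rightarrow> nat. p 0 = u \<and> p k = v \<and> (\<forall>i<k. {p i, p (Suc i)} \<in> E))"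

text \<open>Graph distance (infinite if no path).\<close>
definition gdist :: "nat set set \<Rightarrow> nat \<Rightarrow> nat \<Rightarrow> enat" where
  "gdist E u v = (INF k\<in>{k. walk E u v k}. enat k)"

definition diameter :: "nat \<Rightarrow> nat set set \<Rightarrow> enat" where
  "diameter n E = (SUP u\<in>{1..n}. SUP v\<in>{1..n}. gdist E u v)"

definition degree :: "nat \<Rightarrow> nat set set \<Rightarrow> nat \<Rightarrow> nat" where
  "degree n E i = card {j \<in> {1..n}. {i, j} \<in> E}"

text \<open>A policy: state set S, queue-size map q, empty state s0, and for each state s and
  arriving class i a probability distribution Phi s i over pairs (j, s') where j = None means
  the arriving item is left unmatched (j = \<bottom>) and j = Some k means it is matched with a waiting
  item of class k; s' is the new state.\<close>

text \<open>One-step transition (class i arrives with probability lam i / sum lam): expectation of f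
  at the next state, started in s (uniformized / embedded chain of the arrival process).\<close>
definition Pexp :: "nat \<Rightarrow> (nat \<Rightarrow> real) \<Rightarrow> ('s \<Rightarrow> nat \<Rightarrow> (nat option \<times> 's) pmf) \<Rightarrow> 's
                    \<Rightarrow> ('s \<Rightarrow> real) \<Rightarrow> real" where
  "Pexp n lam Phi s f = (\<Sum>i\<in>{1..n}. lam i / (\<Sum>k\<in>{1..n}. lam k) *
        measure_pmf.expectation (Phi s i) (\<lambda>x. f (snd x)))"

definition step :: "nat \<Rightarrow> (nat \<Rightarrow> real) \<Rightarrow> ('s \<Rightarrow> nat \<Rightarrow> (nat option \<times> 's) pmf) \<Rightarrow> ('s \<times> 's) set" where
  "step n lam Phi = {(s, t). \<exists>i\<in>{1..n}. lam i > 0 \<and> (\<exists>j. pmf (Phi s i) (j, t) > 0)}"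

definition adapted_policy ::
  "nat \<Rightarrow> nat set set \<Rightarrow> (nat \<Rightarrow> real) \<Rightarrow> 's set \<Rightarrow> ('s \<Rightarrow> nat \<Rightarrow> nat) \<Rightarrow> 's
     \<Rightarrow> ('s \<Rightarrow> nat \<Rightarrow> (nat option \<times> 's) pmf) \<Rightarrow> bool" where
  "adapted_policy n E lam S q s0 Phi \<longleftrightarrow>
     countable S \<and> s0 \<in> S \<and>
     (\<forall>s\<in>S. \<forall>i. i \<notin> {1..n} \<longrightarrow> q s i = 0) \<and>
     (\<forall>s\<in>S. (\<forall>i\<in>{1..n}. q s i = 0) \<longleftrightarrow> s = s0) \<and>
     (\<forall>s\<in>S. \<forall>i\<in>{1..n}. \<forall>(j, t)\<in>set_pmf (Phi s i). t \<in> S \<and>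
        (case j of
           None \<Rightarrow> q t = (q s)(i := q s i + 1)
         | Some k \<Rightarrow> k \<in> nbrs E i \<and> q s k > 0 \<and> q t = (q s)(k := q s k - 1))) \<and>
     (\<forall>s\<in>S. \<forall>t\<in>S. (s, t) \<in> (step n lam Phi \<inter> (S \<times> S))\<^sup>*)"

definition greedy ::
  "nat \<Rightarrow> nat set set \<Rightarrow> 's set \<Rightarrow> ('s \<Rightarrow> nat \<Rightarrow> nat)
     \<Rightarrow> ('s \<Rightarrow> nat \<Rightarrow> (nat option \<times> 's) pmf) \<Rightarrow> bool" where
  "greedy n E S q Phi \<longleftrightarrow>
     (\<forall>s\<in>S. \<forall>i\<in>{1..n}. \<forall>(j, t)\<in>set_pmf (Phi s i).
        j = None \<longrightarrow> (\<forall>k\<in>nbrs E i. q s k = 0))"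

text \<open>Probability, started in t, of hitting state a for the first time at step k.\<close>
fun hit :: "nat \<Rightarrow> (nat \<Rightarrow> real) \<Rightarrow> ('s \<Rightarrow> nat \<Rightarrow> (nat option \<times> 's) pmf) \<Rightarrow> 's
              \<Rightarrow> nat \<Rightarrow> 's \<Rightarrow> real" where
  "hit n lam Phi a 0 t = (if t = a then 1 else 0)"
| "hit n lam Phi a (Suc k) t = (if t = a then 0 else Pexp n lam Phi t (hit n lam Phi a k))"

definition first_return :: "nat \<Rightarrow> (nat \<Rightarrow> real) \<Rightarrow> ('s \<Rightarrow> nat \<Rightarrow> (nat option \<times> 's) pmf)
                              \<Rightarrow> 's \<Rightarrow> nat \<Rightarrow> real" where
  "first_return n lam Phi a k = (if k = 0 then 0 else Pexp n lam Phi a (hit n lam Phi a (k - 1)))"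

definition positive_recurrent :: "nat \<Rightarrow> (nat \<Rightarrow> real) \<Rightarrow> ('s \<Rightarrow> nat \<Rightarrow> (nat option \<times> 's) pmf)
                                    \<Rightarrow> 's \<Rightarrow> bool" where
  "positive_recurrent n lam Phi a \<longleftrightarrow>
     first_return n lam Phi a sums 1 \<and> summable (\<lambda>k. real k * first_return n lam Phi a k)"

definition stable :: "nat \<Rightarrow> (nat \<Rightarrow> real) \<Rightarrow> 's set \<Rightarrow> ('s \<Rightarrow> nat \<Rightarrow> (nat option \<times> 's) pmf) \<Rightarrow> bool" where
  "stable n lam S Phi \<longleftrightarrow> (\<forall>s\<in>S. positive_recurrent n lam Phi s)"

text \<open>Stabilizable: some adapted policy is stable. Any countable state space is in bijection
  with a subset of nat, so state spaces are taken to be subsets of nat here.\<close>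
definition stabilizable :: "nat \<Rightarrow> nat set set \<Rightarrow> (nat \<Rightarrow> real) \<Rightarrow> bool" where
  "stabilizable n E lam \<longleftrightarrow>
     (\<exists>(S :: nat set) q s0 Phi. adapted_policy n E lam S q s0 Phi \<and> stable n lam S Phi)"

end

theory Submission
  imports Defs
begin

definition sb :: "nat \<Rightarrow> ('s \<Rightarrow> nat \<Rightarrow> (nat option \<times> 's) pmf) \<Rightarrow> 's \<Rightarrow> ('s \<Rightarrow> real) \<Rightarrow> bool" where
  "sb n Phi t f \<longleftrightarrow> (\<forall>i\<in>{1..n}. \<exists>B. \<forall>x\<in>set_pmf (Phi t i). \<bar>f (snd x)\<bar> \<le> B)"

lemma sb_int:
  assumes "\<forall>x\<in>set_pmf p. \<bar>f (snd x)\<bar> \<le> (B::real)"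
  shows "integrable (measure_pmf p) (\<lambda>x. f (snd x))"
  by (rule measure_pmf.integrable_const_bound[where B=B]) (use assms in \<open>auto simp: AE_measure_pmf_iff\<close>)

lemma sb_intI: "sb n Phi t f \<Longrightarrow> i \<in> {1..n} \<Longrightarrow> integrable (measure_pmf (Phi t i)) (\<lambda>x. f (snd x))"
  unfolding sb_def using sb_int by blast

lemma sb_bounded: "(\<And>s. \<bar>f s\<bar> \<le> B) \<Longrightarrow> sb n Phi t f"
  unfolding sb_def by blast

lemma sb_add: "sb n Phi t f \<Longrightarrow> sb n Phi t g \<Longrightarrow> sb n Phi t (\<lambda>s. f s + g s)"
  unfolding sb_def
proof (intro ballI)
  fix i assume f: "\<forall>i\<in>{1..n}. \<exists>B. \<forall>x\<in>set_pmf (Phi t i). \<bar>f (snd x)\<bar> \<le> B"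
    and g: "\<forall>i\<in>{1..n}. \<exists>B. \<forall>x\<in>set_pmf (Phi t i). \<bar>g (snd x)\<bar> \<le> B" and i: "i \<in> {1..n}"
  obtain B1 where "\<forall>x\<in>set_pmf (Phi t i). \<bar>f (snd x)\<bar> \<le> B1" using f i by blast
  moreover obtain B2 where "\<forall>x\<in>set_pmf (Phi t i). \<bar>g (snd x)\<bar> \<le> B2" using g i by blast
  ultimately show "\<exists>B. \<forall>x\<in>set_pmf (Phi t i). \<bar>f (snd x) + g (snd x)\<bar> \<le> B"
    by (intro exI[of _ "B1+B2"]) (smt (verit))
qed

lemma sb_cmult: "sb n Phi t f \<Longrightarrow> sb n Phi t (\<lambda>s. c * f s)"
  unfolding sb_def
proof (intro ballI)
  fix i assume f: "\<forall>i\<in>{1..n}. \<exists>B. \<forall>x\<in>set_pmf (Phi t i). \<bar>f (snd x)\<bar> \<le> B" and i: "i \<in> {1..n}"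
  obtain B1 where "\<forall>x\<in>set_pmf (Phi t i). \<bar>f (snd x)\<bar> \<le> B1" using f i by blast
  then show "\<exists>B. \<forall>x\<in>set_pmf (Phi t i). \<bar>c * f (snd x)\<bar> \<le> B"
    by (intro exI[of _ "\<bar>c\<bar>*B1"]) (auto simp: abs_mult intro: mult_left_mono)
qed

lemma sb_diff: "sb n Phi t f \<Longrightarrow> sb n Phi t g \<Longrightarrow> sb n Phi t (\<lambda>s. f s - g s)"
  using sb_add[of n Phi t f "\<lambda>s. -1 * g s"] sb_cmult[of n Phi t g "-1"] by simp

locale mc =
  fixes n :: nat and lam :: "nat \<Rightarrow> real" and Phi :: "'s \<Rightarrow> nat \<Rightarrow> (nat option \<times> 's) pmf"
  assumes pos: "\<forall>i\<in>{1..n}. lam i > 0" and npos: "n \<ge> 1"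
begin

abbreviation "tot \<equiv> (\<Sum>k\<in>{1..n}. lam k)"
abbreviation "P \<equiv> Pexp n lam Phi"

lemma tot_pos: "tot > 0"
  using pos npos by (intro sum_pos) auto

lemma P_const: "P t (\<lambda>_. c) = c"
proof -
  have "P t (\<lambda>_. c) = (\<Sum>i\<in>{1..n}. lam i / tot * c)" by (simp add: Pexp_def)
  also have "\<dots> = (\<Sum>i\<in>{1..n}. lam i) / tot * c" by (simp only: sum_distrib_right sum_divide_distrib)
  finally show ?thesis using tot_pos by simp
qed

lemma P_cmult: "P t (\<lambda>s. c * f s) = c * P t f"
  by (simp add: Pexp_def sum_distrib_left algebra_simps)

lemma P_add: "sb n Phi t f \<Longrightarrow> sb n Phi t g \<Longrightarrow> P t (\<lambda>s. f s + g s) = P t f + P t g"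
  unfolding Pexp_def
  by (simp add: sum.distrib[symmetric] distrib_left sb_intI)

lemma P_diff: "sb n Phi t f \<Longrightarrow> sb n Phi t g \<Longrightarrow> P t (\<lambda>s. f s - g s) = P t f - P t g"
  unfolding Pexp_def
  by (simp add: sum_subtractf[symmetric] right_diff_distrib sb_intI)

lemma P_mono:
  assumes "sb n Phi t f" "sb n Phi t g"
    and "\<forall>i\<in>{1..n}. \<forall>x\<in>set_pmf (Phi t i). f (snd x) \<le> g (snd x)"
  shows "P t f \<le> P t g"
  unfolding Pexp_def
proof (rule sum_mono)
  fix i assume i: "i \<in> {1..n}"
  have "measure_pmf.expectation (Phi t i) (\<lambda>x. f (snd x)) \<le> measure_pmf.expectation (Phi t i) (\<lambda>x. g (snd x))"
    using assms i by (intro integral_mono_AE) (auto simp: sb_intI AE_measure_pmf_iff)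
  moreover have "lam i / tot \<ge> 0" using pos i tot_pos by (simp add: less_imp_le)
  ultimately show "lam i / tot * measure_pmf.expectation (Phi t i) (\<lambda>x. f (snd x))
         \<le> lam i / tot * measure_pmf.expectation (Phi t i) (\<lambda>x. g (snd x))"
    by (rule mult_left_mono)
qed

lemma P_nonneg:
  assumes "sb n Phi t f" "\<forall>i\<in>{1..n}. \<forall>x\<in>set_pmf (Phi t i). f (snd x) \<ge> 0"
  shows "P t f \<ge> 0"
  using P_mono[of t "\<lambda>_. 0" f] assms P_const by (auto intro: sb_bounded)

lemma P_lower:
  assumes "sb n Phi t f" "\<forall>i\<in>{1..n}. \<forall>x\<in>set_pmf (Phi t i). f (snd x) \<ge> 0"
    and i: "i \<in> {1..n}"
  shows "P t f \<ge> lam i / tot * pmf (Phi t i) x * f (snd x)"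
proof -
  have nn: "\<And>k. k \<in> {1..n} \<Longrightarrow> 0 \<le> lam k / tot * measure_pmf.expectation (Phi t k) (\<lambda>x. f (snd x))"
    using assms pos tot_pos
    by (intro mult_nonneg_nonneg integral_nonneg_AE) (auto simp: AE_measure_pmf_iff less_imp_le)
  have e: "measure_pmf.expectation (Phi t i) (\<lambda>y. f (snd y) * indicator {x} y) = f (snd x) * pmf (Phi t i) x"
    by (subst integral_measure_pmf_real[where A="{x}"]) (auto simp: indicator_def split: if_splits)
  have "measure_pmf.expectation (Phi t i) (\<lambda>y. f (snd y) * indicator {x} y) \<le> measure_pmf.expectation (Phi t i) (\<lambda>x. f (snd x))"
  proof (intro integral_mono_AE)
    show "integrable (measure_pmf (Phi t i)) (\<lambda>y. f (snd y) * indicator {x} y)"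
      by (intro integrable_real_mult_indicator sb_intI[OF assms(1) i]) auto
    show "integrable (measure_pmf (Phi t i)) (\<lambda>x. f (snd x))" using assms(1) i by (rule sb_intI)
  qed (use assms i in \<open>auto simp:  AE_measure_pmf_iff split: split_indicator\<close>)
  with e have ee: "pmf (Phi t i) x * f (snd x) \<le> measure_pmf.expectation (Phi t i) (\<lambda>x. f (snd x))"
    by (simp add: mult.commute)
  have "lam i / tot \<ge> 0" using pos i tot_pos by (simp add: less_imp_le)
  from mult_left_mono[OF ee this]
  have "lam i / tot * pmf (Phi t i) x * f (snd x) \<le> lam i / tot * measure_pmf.expectation (Phi t i) (\<lambda>x. f (snd x))"
    by (simp add: mult.assoc)
  also have "\<dots> \<le> P t f" unfolding Pexp_def
    by (rule member_le_sum) (use i nn in auto)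
  finally show ?thesis .
qed


lemma P_bnd01:
  assumes "\<And>s. 0 \<le> f s" "\<And>s. f s \<le> 1"
  shows "0 \<le> P t f \<and> P t f \<le> 1"
proof
  have sbf: "sb n Phi t f" by (rule sb_bounded[where B=1]) (use assms in \<open>auto simp: abs_le_iff\<close>)
  show "0 \<le> P t f" by (rule P_nonneg[OF sbf]) (use assms in auto)
  have "P t f \<le> P t (\<lambda>_. 1)" by (rule P_mono[OF sbf]) (use assms in \<open>auto intro: sb_bounded[where B=1]\<close>)
  then show "P t f \<le> 1" by (simp add: P_const)
qed

lemma sb_sum: "finite F \<Longrightarrow> (\<forall>j\<in>F. sb n Phi t (f j)) \<Longrightarrow> sb n Phi t (\<lambda>s. \<Sum>j\<in>F. f j s)"
proof (induction F rule: finite_induct)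
  case empty then show ?case by (simp add: sb_bounded[where B=0])
next
  case (insert x F) then show ?case by (simp add: sb_add)
qed

lemma P_sum: "finite F \<Longrightarrow> (\<forall>j\<in>F. sb n Phi t (f j)) \<Longrightarrow> P t (\<lambda>s. \<Sum>j\<in>F. f j s) = (\<Sum>j\<in>F. P t (f j))"
proof (induction F rule: finite_induct)
  case empty then show ?case by (simp add: P_const)
next
  case (insert x F) then show ?case by (simp add: P_add sb_sum)
qed

abbreviation "H \<equiv> hit n lam Phi"

lemma hit_bnd: "0 \<le> H a k t \<and> H a k t \<le> 1"
proof (induction k arbitrary: t)
  case 0 then show ?case by simp
next
  case (Suc k) then show ?case using P_bnd01[of "H a k" t] by auto
qed

lemma sb_hit: "sb n Phi t (H a k)"
  by (rule sb_bounded[where B=1]) (use hit_bnd in \<open>auto simp: abs_le_iff\<close>)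

definition Tl :: "'s \<Rightarrow> nat \<Rightarrow> 's \<Rightarrow> real" where
  "Tl a K t = 1 - (\<Sum>j\<le>K. H a j t)"

definition Gl :: "'s \<Rightarrow> nat \<Rightarrow> 's \<Rightarrow> real" where
  "Gl a K t = (\<Sum>k<K. Tl a k t)"

lemma Tl_a: "Tl a K a = 0"
proof -
  have "(\<Sum>j\<le>K. H a j a) = (\<Sum>j\<le>K. if j = 0 then 1 else 0)"
    by (rule sum.cong) (auto simp: gr0_conv_Suc)
  also have "\<dots> = 1" by (simp add: sum.delta)
  finally show ?thesis by (simp add: Tl_def)
qed

lemma Tl_0: "t \<noteq> a \<Longrightarrow> Tl a 0 t = 1"
  by (simp add: Tl_def)

lemma Tl_Suc: "t \<noteq> a \<Longrightarrow> Tl a (Suc K) t = P t (Tl a K)"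
proof -
  assume ta: "t \<noteq> a"
  have "Tl a (Suc K) t = 1 - (H a 0 t + (\<Sum>j\<le>K. H a (Suc j) t))"
    unfolding Tl_def by (subst sum.atMost_Suc_shift) (simp del: hit.simps)
  also have "\<dots> = 1 - (\<Sum>j\<le>K. P t (H a j))" using ta by simp
  also have "\<dots> = P t (\<lambda>_. 1) - P t (\<lambda>s. \<Sum>j\<le>K. H a j s)"
    by (simp add: P_const P_sum sb_hit)
  also have "\<dots> = P t (Tl a K)" unfolding Tl_def
    by (rule P_diff[symmetric]) (auto intro: sb_bounded[where B=1] sb_sum sb_hit)
  finally show ?thesis .
qed

lemma Tl_dec: "Tl a (Suc K) t = Tl a K t - H a (Suc K) t"
  by (simp add: Tl_def del: hit.simps)

lemma Tl_bnd: "0 \<le> Tl a K t \<and> Tl a K t \<le> 1"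
proof (induction K arbitrary: t)
  case 0 then show ?case by (cases "t = a") (auto simp: Tl_a Tl_0)
next
  case (Suc K) then show ?case using P_bnd01[of "Tl a K" t] by (cases "t = a") (auto simp: Tl_a Tl_Suc)
qed

lemma Tl_mono: "k \<le> K \<Longrightarrow> Tl a K t \<le> Tl a k t"
proof (induction K)
  case 0 then show ?case by simp
next
  case (Suc K) then show ?case using Tl_dec[of a K t] hit_bnd[of a "Suc K" t]
    by (cases "k = Suc K") auto
qed

lemma sb_Tl: "sb n Phi t (Tl a K)"
  by (rule sb_bounded[where B=1]) (use Tl_bnd in \<open>auto simp: abs_le_iff\<close>)

lemma Gl_bnd: "0 \<le> Gl a K t \<and> Gl a K t \<le> real K"
proof -
  have "Gl a K t \<le> (\<Sum>k<K. 1)" unfolding Gl_def by (rule sum_mono) (use Tl_bnd in auto)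
  moreover have "Gl a K t \<ge> 0" unfolding Gl_def by (rule sum_nonneg) (use Tl_bnd in auto)
  ultimately show ?thesis by simp
qed

lemma sb_Gl: "sb n Phi t (Gl a K)"
  by (rule sb_bounded[where B="real K"]) (use Gl_bnd in \<open>auto simp: abs_le_iff\<close>)

lemma Gl_a: "Gl a K a = 0"
  by (simp add: Gl_def Tl_a)

lemma Gl_Suc: "t \<noteq> a \<Longrightarrow> Gl a (Suc K) t = 1 + P t (Gl a K)"
proof -
  assume ta: "t \<noteq> a"
  have "Gl a (Suc K) t = Tl a 0 t + (\<Sum>k<K. Tl a (Suc k) t)"
    unfolding Gl_def by (subst sum.lessThan_Suc_shift) simp
  also have "\<dots> = 1 + (\<Sum>k<K. P t (Tl a k))" using ta by (simp add: Tl_0 Tl_Suc)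
  also have "\<dots> = 1 + P t (Gl a K)" unfolding Gl_def by (simp add: P_sum sb_Tl)
  finally show ?thesis .
qed

lemma Gl_mono: "k \<le> K \<Longrightarrow> Gl a k t \<le> Gl a K t"
  unfolding Gl_def by (rule sum_mono2) (use Tl_bnd in auto)

lemma KT_le_G: "real K * Tl a K t \<le> Gl a K t"
proof -
  have "(\<Sum>k<K. Tl a K t) \<le> Gl a K t" unfolding Gl_def by (rule sum_mono) (simp add: Tl_mono)
  then show ?thesis by simp
qed

lemma jhit: "(\<Sum>j\<le>K. real j * H a j t) = Gl a K t - real K * Tl a K t"
proof (induction K)
  case 0 then show ?case by (simp add: Gl_def)
next
  case (Suc K)
  have "(\<Sum>j\<le>Suc K. real j * H a j t) = Gl a K t - real K * Tl a K t + real (Suc K) * H a (Suc K) t"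
    using Suc by (simp del: hit.simps)
  also have "\<dots> = Gl a (Suc K) t - real (Suc K) * Tl a (Suc K) t"
    by (simp add: Gl_def Tl_dec algebra_simps del: hit.simps)
  finally show ?case .
qed

abbreviation "FR \<equiv> first_return n lam Phi"

lemma FR_partial: "(\<Sum>k<Suc (Suc K). FR a k) = 1 - P a (Tl a K)"
proof -
  have "(\<Sum>k<Suc (Suc K). FR a k) = FR a 0 + (\<Sum>k<Suc K. FR a (Suc k))"
    by (rule sum.lessThan_Suc_shift)
  also have "\<dots> = (\<Sum>j\<le>K. P a (H a j))"
    by (simp add: first_return_def lessThan_Suc_atMost del: hit.simps)
  also have "\<dots> = P a (\<lambda>s. \<Sum>j\<le>K. H a j s)" by (simp add: P_sum sb_hit del: hit.simps)
  also have "\<dots> = P a (\<lambda>s. 1 - Tl a K s)" by (simp add: Tl_def del: hit.simps)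
  also have "\<dots> = 1 - P a (Tl a K)"
    by (subst P_diff) (auto simp: P_const sb_Tl intro: sb_bounded[where B=1])
  finally show ?thesis .
qed

lemma FR_nonneg: "FR a k \<ge> 0"
  using P_bnd01[of "H a (k-1)" a] hit_bnd by (simp add: first_return_def)

lemma FR_wpartial: "(\<Sum>k<Suc (Suc K). real k * FR a k) = P a (\<lambda>s. \<Sum>j\<le>K. real (Suc j) * H a j s)"
proof -
  have "(\<Sum>k<Suc (Suc K). real k * FR a k) = real 0 * FR a 0 + (\<Sum>k<Suc K. real (Suc k) * FR a (Suc k))"
    by (rule sum.lessThan_Suc_shift)
  also have "\<dots> = (\<Sum>j\<le>K. real (Suc j) * P a (H a j))"
    by (simp add: first_return_def lessThan_Suc_atMost del: hit.simps of_nat_Suc)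
  also have "\<dots> = (\<Sum>j\<le>K. P a (\<lambda>s. real (Suc j) * H a j s))" by (simp add: P_cmult del: hit.simps of_nat_Suc)
  also have "\<dots> = P a (\<lambda>s. \<Sum>j\<le>K. real (Suc j) * H a j s)"
    by (rule P_sum[symmetric]) (auto intro: sb_cmult sb_hit)
  finally show ?thesis .
qed

lemma prG:
  assumes W: "\<forall>i\<in>{1..n}. \<forall>x\<in>set_pmf (Phi a i). \<forall>K. Gl a K (snd x) \<le> W (snd x)"
    and sbW: "sb n Phi a W"
  shows "positive_recurrent n lam Phi a"
  unfolding positive_recurrent_def
proof
  have lim0: "(\<lambda>K. P a (Tl a K)) \<longlonglongrightarrow> 0"
  proof (rule tendsto_sandwich[where f="\<lambda>_. 0" and h="\<lambda>K. P a W / real K"])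
    show "\<forall>\<^sub>F K in sequentially. 0 \<le> P a (Tl a K)"
      using P_bnd01[of "Tl a _" a] Tl_bnd by auto
    show "\<forall>\<^sub>F K in sequentially. P a (Tl a K) \<le> P a W / real K"
    proof (rule eventually_sequentiallyI[of 1])
      fix K :: nat assume K: "1 \<le> K"
      have "P a (\<lambda>s. real K * Tl a K s) \<le> P a W"
      proof (rule P_mono)
        show "\<forall>i\<in>{1..n}. \<forall>x\<in>set_pmf (Phi a i). real K * Tl a K (snd x) \<le> W (snd x)"
          using W KT_le_G order_trans by blast
      qed (auto intro: sb_cmult sb_Tl sbW)
      then have "real K * P a (Tl a K) \<le> P a W" by (simp add: P_cmult)
      then show "P a (Tl a K) \<le> P a W / real K" using K by (simp add: field_simps)
    qed
    show "(\<lambda>_. 0) \<longlonglongrightarrow> (0::real)" by simp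
    show "(\<lambda>K. P a W / real K) \<longlonglongrightarrow> 0" by (rule lim_const_over_n)
  qed
  have "(\<lambda>K. \<Sum>k<Suc (Suc K). FR a k) \<longlonglongrightarrow> 1"
    unfolding FR_partial using tendsto_diff[OF tendsto_const[of 1] lim0] by simp
  then have "(\<lambda>K. \<Sum>k<Suc K. FR a k) \<longlonglongrightarrow> 1"
    by (intro LIMSEQ_imp_Suc[of "\<lambda>K. \<Sum>k<Suc K. FR a k"]) simp
  then have "(\<lambda>K. \<Sum>k<K. FR a k) \<longlonglongrightarrow> 1"
    by (intro LIMSEQ_imp_Suc[of "\<lambda>K. \<Sum>k<K. FR a k"]) simp
  then show "FR a sums 1" by (simp add: sums_def)
next
  have bnd: "(\<Sum>k<Suc (Suc K). real k * FR a k) \<le> P a (\<lambda>s. W s + 1)" for K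
  proof -
    have "P a (\<lambda>s. \<Sum>j\<le>K. real (Suc j) * H a j s) \<le> P a (\<lambda>s. W s + 1)"
    proof (rule P_mono)
      show "sb n Phi a (\<lambda>s. \<Sum>j\<le>K. real (Suc j) * H a j s)"
        by (auto intro!: sb_sum sb_cmult sb_hit)
      show "sb n Phi a (\<lambda>s. W s + 1)" by (intro sb_add sbW sb_bounded[where B=1]) simp
      show "\<forall>i\<in>{1..n}. \<forall>x\<in>set_pmf (Phi a i). (\<Sum>j\<le>K. real (Suc j) * H a j (snd x)) \<le> W (snd x) + 1"
      proof (intro ballI)
        fix i x assume i: "i \<in> {1..n}" and x: "x \<in> set_pmf (Phi a i)"
        have "(\<Sum>j\<le>K. real (Suc j) * H a j (snd x)) = (\<Sum>j\<le>K. real j * H a j (snd x)) + (\<Sum>j\<le>K. H a j (snd x))"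
          by (simp add: sum.distrib[symmetric] algebra_simps del: hit.simps)
        also have "\<dots> = Gl a K (snd x) - real K * Tl a K (snd x) + 1 - Tl a K (snd x)"
          by (simp add: jhit Tl_def del: hit.simps)
        also have "\<dots> \<le> Gl a K (snd x) + 1"
        proof -
          have "0 \<le> real K * Tl a K (snd x)" using Tl_bnd[of a K "snd x"] by simp
          then show ?thesis using Tl_bnd[of a K "snd x"] by linarith
        qed
        also have "\<dots> \<le> W (snd x) + 1" using W i x by auto
        finally show "(\<Sum>j\<le>K. real (Suc j) * H a j (snd x)) \<le> W (snd x) + 1" .
      qed
    qed
    then show ?thesis by (simp only: FR_wpartial)
  qed
  show "summable (\<lambda>k. real k * FR a k)"
  proof (rule summableI_nonneg_bounded)
    show "0 \<le> real k * FR a k" for k using FR_nonneg by simp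
    show "(\<Sum>k<N. real k * FR a k) \<le> P a (\<lambda>s. W s + 1)" for N
    proof -
      have "(\<Sum>k<N. real k * FR a k) \<le> (\<Sum>k<Suc (Suc N). real k * FR a k)"
        by (rule sum_mono2) (auto intro: FR_nonneg mult_nonneg_nonneg)
      with bnd[of N] show ?thesis by simp
    qed
  qed
qed


lemma foster:
  assumes closed: "\<forall>t\<in>S. \<forall>i\<in>{1..n}. \<forall>x\<in>set_pmf (Phi t i). snd x \<in> S"
    and Vnn: "\<forall>t\<in>S. V t \<ge> 0" and sbV: "\<forall>t\<in>S. sb n Phi t V"
    and drift: "\<forall>t\<in>S. t \<noteq> a \<longrightarrow> P t V \<le> V t - 1"
  shows "\<forall>t\<in>S. Gl a K t \<le> V t"
proof (induction K)
  case 0 then show ?case using Vnn by (simp add: Gl_def)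
next
  case (Suc K)
  show ?case
  proof
    fix t assume t: "t \<in> S"
    show "Gl a (Suc K) t \<le> V t"
    proof (cases "t = a")
      case True then show ?thesis using Vnn t by (simp add: Gl_a)
    next
      case False
      have "P t (Gl a K) \<le> P t V"
        by (rule P_mono) (use Suc closed t sbV sb_Gl in auto)
      moreover have "P t V \<le> V t - 1" using drift t False by blast
      ultimately show ?thesis using False by (simp add: Gl_Suc)
    qed
  qed
qed

fun hb :: "'s \<Rightarrow> 's \<Rightarrow> nat \<Rightarrow> 's \<Rightarrow> real" where
  "hb b c 0 t = (if t = b then 1 else 0)"
| "hb b c (Suc K) t = (if t = b then 1 else if t = c then 0 else P t (hb b c K))"

lemma hb_bnd: "0 \<le> hb b c K t \<and> hb b c K t \<le> 1"
proof (induction K arbitrary: t)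
  case 0 then show ?case by simp
next
  case (Suc K) then show ?case using P_bnd01[of "hb b c K" t] by auto
qed

lemma sb_hb: "sb n Phi t (hb b c K)"
  by (rule sb_bounded[where B=1]) (use hb_bnd in \<open>auto simp: abs_le_iff\<close>)

lemma hb_Suc_mono: "hb b c K t \<le> hb b c (Suc K) t"
proof (induction K arbitrary: t)
  case 0 then show ?case using hb_bnd[of b c 0] P_bnd01[of "hb b c 0" t] by auto
next
  case (Suc K)
  have "P t (hb b c K) \<le> P t (hb b c (Suc K))"
    by (rule P_mono) (use Suc in \<open>auto intro: sb_hb\<close>)
  then show ?case by (simp del: hb.simps(2) add: hb.simps(2)[of b c K] hb.simps(2)[of b c "Suc K"])
qed

lemma hb_mono: "k \<le> K \<Longrightarrow> hb b c k t \<le> hb b c K t"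
proof (induction K)
  case 0 then show ?case by simp
next
  case (Suc K) then show ?case using hb_Suc_mono[of b c K t] by (cases "k = Suc K") auto
qed

lemma hb_sum: "b \<noteq> c \<Longrightarrow> hb b c K t + hb c b K t \<le> 1"
proof (induction K arbitrary: t)
  case 0 then show ?case by auto
next
  case (Suc K)
  show ?case
  proof (cases "t = b \<or> t = c")
    case True then show ?thesis using Suc.prems by auto
  next
    case False
    have "P t (hb b c K) + P t (hb c b K) = P t (\<lambda>s. hb b c K s + hb c b K s)"
      by (rule P_add[symmetric]) (auto intro: sb_hb)
    also have "\<dots> \<le> P t (\<lambda>_. 1)"
      by (rule P_mono) (use Suc in \<open>auto intro: sb_hb sb_add sb_bounded[where B=1]\<close>)
    finally show ?thesis using False by (simp add: P_const)
  qed
qed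

lemma hb_at: "hb b c K b = 1"
  by (cases K) auto

lemma hb_pos:
  assumes "(t, b) \<in> {(u, v). u \<noteq> c \<and> (\<exists>i\<in>{1..n}. lam i > 0 \<and> (\<exists>j. pmf (Phi u i) (j, v) > 0))}\<^sup>*"
  shows "\<exists>K. hb b c K t > 0"
  using assms
proof (induction rule: converse_rtrancl_induct)
  case base then show ?case by (intro exI[of _ 0]) simp
next
  case (step x u)
  then obtain K where K: "hb b c K u > 0" by blast
  from step(1) obtain i j where xc: "x \<noteq> c" and i: "i \<in> {1..n}" "lam i > 0" and pj: "pmf (Phi x i) (j, u) > 0"
    by blast
  show ?case
  proof (cases "x = b")
    case True then show ?thesis by (intro exI[of _ 0]) simp
  next
    case False
    have "P x (hb b c K) \<ge> lam i / tot * pmf (Phi x i) (j, u) * hb b c K (snd (j, u))"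
      by (rule P_lower) (use i hb_bnd in \<open>auto intro: sb_hb\<close>)
    moreover have "lam i / tot * pmf (Phi x i) (j, u) * hb b c K (snd (j, u)) > 0"
      using i pj K tot_pos by simp
    ultimately show ?thesis using False xc by (intro exI[of _ "Suc K"]) simp
  qed
qed

lemma path_split:
  assumes "(t, a) \<in> R\<^sup>*"
  shows "(t, a) \<in> {(u, v). (u, v) \<in> R \<and> u \<noteq> s0}\<^sup>* \<or>
         (\<exists>x1. (s0, x1) \<in> R \<and> (x1, a) \<in> {(u, v). (u, v) \<in> R \<and> u \<noteq> s0}\<^sup>*)"
  using assms
proof (induction rule: converse_rtrancl_induct)
  case base then show ?case by simp
next
  case (step y z)
  show ?case
  proof (cases "y = s0")
    case True then show ?thesis using step by blast
  next
    case False
    then have "(y, z) \<in> {(u, v). (u, v) \<in> R \<and> u \<noteq> s0}" using step(1) by simp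
    then show ?thesis using step(3) by (meson converse_rtrancl_into_rtrancl)
  qed
qed

lemma pr_s0:
  assumes closed: "\<forall>t\<in>S. \<forall>i\<in>{1..n}. \<forall>x\<in>set_pmf (Phi t i). snd x \<in> S"
    and Vnn: "\<forall>t\<in>S. V t \<ge> 0" and sbV: "\<forall>t\<in>S. sb n Phi t V"
    and drift: "\<forall>t\<in>S. t \<noteq> s0 \<longrightarrow> P t V \<le> V t - 1" and s0: "s0 \<in> S"
  shows "positive_recurrent n lam Phi s0"
proof (rule prG)
  show "sb n Phi s0 V" using sbV s0 by blast
  show "\<forall>i\<in>{1..n}. \<forall>x\<in>set_pmf (Phi s0 i). \<forall>K. Gl s0 K (snd x) \<le> V (snd x)"
    using foster[OF closed Vnn sbV drift] closed s0 by blast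
qed

lemma pr_other:
  assumes closed: "\<forall>t\<in>S. \<forall>i\<in>{1..n}. \<forall>x\<in>set_pmf (Phi t i). snd x \<in> S"
    and Vnn: "\<forall>t\<in>S. V t \<ge> 0" and sbV: "\<forall>t\<in>S. sb n Phi t V"
    and drift: "\<forall>t\<in>S. t \<noteq> s0 \<longrightarrow> P t V \<le> V t - 1" and s0: "s0 \<in> S"
    and aS: "a \<in> S" and as0: "a \<noteq> s0" and reach: "(s0, a) \<in> (step n lam Phi)\<^sup>*"
  shows "positive_recurrent n lam Phi a"
proof -
  have G0: "\<forall>t\<in>S. Gl s0 K t \<le> V t" for K using foster[OF closed Vnn sbV drift] .
  define R where "R = step n lam Phi"
  have "(s0, a) \<in> {(u, v). (u, v) \<in> R \<and> u \<noteq> s0}\<^sup>* \<or>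
         (\<exists>x1. (s0, x1) \<in> R \<and> (x1, a) \<in> {(u, v). (u, v) \<in> R \<and> u \<noteq> s0}\<^sup>*)"
  proof -
    have "(s0, a) \<in> R\<^sup>*" using reach R_def by simp
    from path_split[OF this] show ?thesis .
  qed
  moreover have "(s0, a) \<notin> {(u, v). (u, v) \<in> R \<and> u \<noteq> s0}\<^sup>*"
  proof
    assume "(s0, a) \<in> {(u, v). (u, v) \<in> R \<and> u \<noteq> s0}\<^sup>*"
    then show False using as0 by (cases rule: converse_rtranclE) auto
  qed
  ultimately obtain x1 where x1: "(s0, x1) \<in> R" and x1a: "(x1, a) \<in> {(u, v). (u, v) \<in> R \<and> u \<noteq> s0}\<^sup>*"
    by blast
  have "{(u, v). (u, v) \<in> R \<and> u \<noteq> s0} = {(u, v). u \<noteq> s0 \<and> (\<exists>i\<in>{1..n}. lam i > 0 \<and> (\<exists>j. pmf (Phi u i) (j, v) > 0))}"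
    unfolding R_def step_def by auto
  with x1a have x1a': "(x1, a) \<in> {(u, v). u \<noteq> s0 \<and> (\<exists>i\<in>{1..n}. lam i > 0 \<and> (\<exists>j. pmf (Phi u i) (j, v) > 0))}\<^sup>*"
    by simp
  obtain L where L: "hb a s0 L x1 > 0" using hb_pos[OF x1a'] by blast
  from x1 obtain i j where i: "i \<in> {1..n}" "lam i > 0" and pj: "pmf (Phi s0 i) (j, x1) > 0"
    by (auto simp: R_def step_def)
  define \<alpha> where "\<alpha> = P s0 (hb a s0 L)"
  have "\<alpha> \<ge> lam i / tot * pmf (Phi s0 i) (j, x1) * hb a s0 L (snd (j, x1))"
    unfolding \<alpha>_def by (rule P_lower) (use i hb_bnd in \<open>auto intro: sb_hb\<close>)
  moreover have "lam i / tot * pmf (Phi s0 i) (j, x1) * hb a s0 L (snd (j, x1)) > 0"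
    using i pj L tot_pos by simp
  ultimately have apos: "\<alpha> > 0" by linarith
  have rho: "P s0 (hb s0 a K) \<le> 1 - \<alpha>" for K
  proof -
    have "P s0 (hb s0 a K) \<le> P s0 (\<lambda>s. 1 - hb a s0 L s)"
    proof (rule P_mono)
      show "\<forall>i\<in>{1..n}. \<forall>x\<in>set_pmf (Phi s0 i). hb s0 a K (snd x) \<le> 1 - hb a s0 L (snd x)"
      proof (intro ballI)
        fix i x
        have "hb s0 a K (snd x) \<le> hb s0 a (max K L) (snd x)" by (rule hb_mono) simp
        moreover have "hb a s0 L (snd x) \<le> hb a s0 (max K L) (snd x)" by (rule hb_mono) simp
        moreover have "hb s0 a (max K L) (snd x) + hb a s0 (max K L) (snd x) \<le> 1"
          using hb_sum[of s0 a "max K L" "snd x"] as0 by simp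
        ultimately show "hb s0 a K (snd x) \<le> 1 - hb a s0 L (snd x)" by linarith
      qed
      show "sb n Phi s0 (\<lambda>s. 1 - hb a s0 L s)" by (intro sb_diff sb_hb sb_bounded[where B=1]) simp
    qed (rule sb_hb)
    also have "\<dots> = 1 - \<alpha>" unfolding \<alpha>_def
      by (subst P_diff) (auto simp: P_const intro: sb_hb sb_bounded[where B=1])
    finally show ?thesis .
  qed
  define e where "e K = Gl a K s0" for K
  have e_nn: "e K \<ge> 0" for K using Gl_bnd by (simp add: e_def)
  have e_mono: "e K \<le> e (Suc K)" for K unfolding e_def by (rule Gl_mono) simp
  have claim: "\<forall>t\<in>S. Gl a K t \<le> Gl s0 K t + e K * hb s0 a K t" for K
  proof (induction K)
    case 0 then show ?case using hb_bnd by (simp add: Gl_def e_def)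
  next
    case (Suc K)
    show ?case
    proof
      fix t assume t: "t \<in> S"
      consider "t = a" | "t = s0" | "t \<noteq> a" "t \<noteq> s0" by blast
      then show "Gl a (Suc K) t \<le> Gl s0 (Suc K) t + e (Suc K) * hb s0 a (Suc K) t"
      proof cases
        case 1 then show ?thesis using Gl_bnd[of s0 "Suc K" t] hb_bnd[of s0 a "Suc K" t] e_nn[of "Suc K"]
          by (simp add: Gl_a)
      next
        case 2 then show ?thesis by (simp add: Gl_a e_def hb_at)
      next
        case 3
        have "P t (Gl a K) \<le> P t (\<lambda>s. Gl s0 K s + e K * hb s0 a K s)"
        proof (rule P_mono)
          show "sb n Phi t (\<lambda>s. Gl s0 K s + e K * hb s0 a K s)" by (intro sb_add sb_cmult sb_Gl sb_hb)
        qed (use Suc closed t in \<open>auto intro: sb_Gl\<close>)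
        also have "\<dots> = P t (Gl s0 K) + e K * P t (hb s0 a K)"
          by (subst P_add) (auto simp: P_cmult intro: sb_Gl sb_cmult sb_hb)
        finally have "Gl a (Suc K) t \<le> Gl s0 (Suc K) t + e K * hb s0 a (Suc K) t"
          using 3 by (simp add: Gl_Suc)
        also have "\<dots> \<le> Gl s0 (Suc K) t + e (Suc K) * hb s0 a (Suc K) t"
          using e_mono[of K] hb_bnd[of s0 a "Suc K" t] by (simp add: mult_right_mono)
        finally show ?thesis .
      qed
    qed
  qed
  define C where "C = (1 + P s0 V) / \<alpha>"
  have PV: "P s0 V \<ge> 0" by (rule P_nonneg) (use sbV Vnn closed s0 in auto)
  have eC: "e K \<le> C" for K
  proof (induction K)
    case 0 then show ?case using PV apos by (simp add: e_def Gl_def C_def)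
  next
    case (Suc K)
    have "P s0 (Gl a K) \<le> P s0 (\<lambda>s. Gl s0 K s + e K * hb s0 a K s)"
    proof (rule P_mono)
      show "sb n Phi s0 (\<lambda>s. Gl s0 K s + e K * hb s0 a K s)" by (intro sb_add sb_cmult sb_Gl sb_hb)
    qed (use claim closed s0 in \<open>auto intro: sb_Gl\<close>)
    also have "\<dots> = P s0 (Gl s0 K) + e K * P s0 (hb s0 a K)"
      by (subst P_add) (auto simp: P_cmult intro: sb_Gl sb_cmult sb_hb)
    also have "\<dots> \<le> P s0 V + e K * (1 - \<alpha>)"
    proof -
      have "P s0 (Gl s0 K) \<le> P s0 V" by (rule P_mono) (use G0 closed s0 sbV in \<open>auto intro: sb_Gl\<close>)
      moreover have "e K * P s0 (hb s0 a K) \<le> e K * (1 - \<alpha>)"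
        using rho e_nn by (simp add: mult_left_mono)
      ultimately show ?thesis by linarith
    qed
    also have "\<dots> \<le> P s0 V + C * (1 - \<alpha>)"
    proof -
      have "1 - \<alpha> \<ge> 0" using P_bnd01[of "hb a s0 L" s0] hb_bnd unfolding \<alpha>_def by auto
      then show ?thesis using Suc by (simp add: mult_right_mono)
    qed
    finally have "e (Suc K) \<le> 1 + P s0 V + C * (1 - \<alpha>)" using as0 by (simp add: e_def Gl_Suc)
    also have "\<dots> = C" using apos by (simp add: C_def field_simps)
    finally show ?case .
  qed
  show ?thesis
  proof (rule prG[where W="\<lambda>s. V s + C"])
    show "sb n Phi a (\<lambda>s. V s + C)" using sbV aS by (auto intro: sb_add sb_bounded[where B="\<bar>C\<bar>"])
    show "\<forall>i\<in>{1..n}. \<forall>x\<in>set_pmf (Phi a i). \<forall>K. Gl a K (snd x) \<le> V (snd x) + C"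
    proof (intro ballI allI)
      fix i x K assume i: "i \<in> {1..n}" and x: "x \<in> set_pmf (Phi a i)"
      have xS: "snd x \<in> S" using closed aS i x by blast
      have "Gl a K (snd x) \<le> Gl s0 K (snd x) + e K * hb s0 a K (snd x)" using claim xS by blast
      also have "\<dots> \<le> V (snd x) + C"
      proof -
        have "e K * hb s0 a K (snd x) \<le> e K * 1" using e_nn[of K] hb_bnd[of s0 a K "snd x"] by (intro mult_left_mono) auto
        moreover have "Gl s0 K (snd x) \<le> V (snd x)" using G0 xS by blast
        ultimately show ?thesis using eC[of K] by linarith
      qed
      finally show "Gl a K (snd x) \<le> V (snd x) + C" .
    qed
  qed
qed


lemma P_lower2:
  assumes "sb n Phi t f" "\<forall>i\<in>{1..n}. \<forall>x\<in>set_pmf (Phi t i). f (snd x) \<ge> 0"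
    and i: "i \<in> {1..n}" and c: "\<forall>x\<in>set_pmf (Phi t i). f (snd x) = c"
  shows "P t f \<ge> lam i / tot * c"
proof -
  have nn: "\<And>k. k \<in> {1..n} \<Longrightarrow> 0 \<le> lam k / tot * measure_pmf.expectation (Phi t k) (\<lambda>x. f (snd x))"
    using assms pos tot_pos
    by (intro mult_nonneg_nonneg integral_nonneg_AE) (auto simp: AE_measure_pmf_iff less_imp_le)
  have "measure_pmf.expectation (Phi t i) (\<lambda>x. f (snd x)) = measure_pmf.expectation (Phi t i) (\<lambda>x. c)"
    by (rule integral_cong_AE) (use c in \<open>auto simp: AE_measure_pmf_iff\<close>)
  then have "lam i / tot * c = lam i / tot * measure_pmf.expectation (Phi t i) (\<lambda>x. f (snd x))"
    by simp
  also have "\<dots> \<le> P t f" unfolding Pexp_def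
    by (rule member_le_sum) (use i nn in auto)
  finally show ?thesis .
qed

lemma P_cong:
  assumes "\<forall>i\<in>{1..n}. \<forall>x\<in>set_pmf (Phi t i). f (snd x) = g (snd x)"
  shows "P t f = P t g"
  unfolding Pexp_def
  by (rule sum.cong[OF refl], rule arg_cong[where f="\<lambda>z. _ * z"], rule integral_cong_AE)
     (use assms in \<open>auto simp: AE_measure_pmf_iff\<close>)

fun Mf :: "('s \<Rightarrow> real) \<Rightarrow> 's \<Rightarrow> nat \<Rightarrow> 's \<Rightarrow> real" where
  "Mf D s0 0 t = max (D t) 0"
| "Mf D s0 (Suc K) t = (if t = s0 then 0 else P t (Mf D s0 K))"

lemma not_pr:
  assumes closed: "\<forall>t\<in>S. \<forall>i\<in>{1..n}. \<forall>x\<in>set_pmf (Phi t i). snd x \<in> S"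
    and s0: "s0 \<in> S" and D0: "D s0 = 0"
    and pm1: "\<forall>t\<in>S. \<forall>i\<in>{1..n}. \<forall>x\<in>set_pmf (Phi t i). D (snd x) = D t + 1 \<or> D (snd x) = D t - 1"
    and drift: "\<forall>t\<in>S. P t D \<ge> D t"
    and up: "i0 \<in> {1..n}" "\<forall>x\<in>set_pmf (Phi s0 i0). D (snd x) = 1"
  shows "\<not> positive_recurrent n lam Phi s0"
proof
  assume pr: "positive_recurrent n lam Phi s0"
  have Dsupp: "\<bar>D (snd x)\<bar> \<le> \<bar>D t\<bar> + 1" if "t \<in> S" "i \<in> {1..n}" "x \<in> set_pmf (Phi t i)" for t i x
    using pm1 that by fastforce
  have sbD: "sb n Phi t D" if "t \<in> S" for t
    unfolding sb_def using Dsupp that by blast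
  have sbDp: "sb n Phi t (\<lambda>s. max (D s) 0)" if "t \<in> S" for t
    unfolding sb_def
  proof
    fix i assume "i \<in> {1..n}"
    then show "\<exists>B. \<forall>x\<in>set_pmf (Phi t i). \<bar>max (D (snd x)) 0\<bar> \<le> B"
      using Dsupp[OF that] by (intro exI[of _ "\<bar>D t\<bar> + 1"]) fastforce
  qed
  have b: "\<forall>t\<in>S. 0 \<le> Mf D s0 K t \<and> Mf D s0 K t \<le> (\<bar>D t\<bar> + real K) * Tl s0 K t" for K
  proof (induction K)
    case 0
    show ?case
    proof
      fix t assume "t \<in> S"
      show "0 \<le> Mf D s0 0 t \<and> Mf D s0 0 t \<le> (\<bar>D t\<bar> + real 0) * Tl s0 0 t"
        using D0 by (cases "t = s0") (auto simp: Tl_a Tl_0)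
    qed
  next
    case (Suc K)
    show ?case
    proof
      fix t assume t: "t \<in> S"
      show "0 \<le> Mf D s0 (Suc K) t \<and> Mf D s0 (Suc K) t \<le> (\<bar>D t\<bar> + real (Suc K)) * Tl s0 (Suc K) t"
      proof (cases "t = s0")
        case True then show ?thesis by (simp add: Tl_a)
      next
        case False
        have supp: "0 \<le> Mf D s0 K (snd x) \<and> Mf D s0 K (snd x) \<le> (\<bar>D t\<bar> + 1 + real K) * Tl s0 K (snd x)"
          if "i \<in> {1..n}" "x \<in> set_pmf (Phi t i)" for i x
        proof -
          have xS: "snd x \<in> S" using closed t that by blast
          have "(\<bar>D (snd x)\<bar> + real K) * Tl s0 K (snd x) \<le> (\<bar>D t\<bar> + 1 + real K) * Tl s0 K (snd x)"
            using Dsupp[OF t that] Tl_bnd[of s0 K "snd x"] by (intro mult_right_mono) auto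
          then show ?thesis using Suc xS by fastforce
        qed
        have sbM: "sb n Phi t (Mf D s0 K)" unfolding sb_def
        proof
          fix i assume i: "i \<in> {1..n}"
          show "\<exists>B. \<forall>x\<in>set_pmf (Phi t i). \<bar>Mf D s0 K (snd x)\<bar> \<le> B"
          proof (intro exI[of _ "\<bar>D t\<bar> + 1 + real K"] ballI)
            fix x assume x: "x \<in> set_pmf (Phi t i)"
            have "(\<bar>D t\<bar> + 1 + real K) * Tl s0 K (snd x) \<le> (\<bar>D t\<bar> + 1 + real K) * 1"
              using Tl_bnd[of s0 K "snd x"] by (intro mult_left_mono) auto
            then show "\<bar>Mf D s0 K (snd x)\<bar> \<le> \<bar>D t\<bar> + 1 + real K" using supp[OF i x] by auto
          qed
        qed
        have "0 \<le> P t (Mf D s0 K)" by (rule P_nonneg[OF sbM]) (use supp in auto)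
        moreover have "P t (Mf D s0 K) \<le> P t (\<lambda>s. (\<bar>D t\<bar> + 1 + real K) * Tl s0 K s)"
          by (rule P_mono[OF sbM]) (use supp in \<open>auto intro: sb_cmult sb_Tl\<close>)
        moreover have "P t (\<lambda>s. (\<bar>D t\<bar> + 1 + real K) * Tl s0 K s) = (\<bar>D t\<bar> + real (Suc K)) * Tl s0 (Suc K) t"
          using False by (simp add: P_cmult Tl_Suc)
        ultimately show ?thesis using False by simp
      qed
    qed
  qed
  have a: "\<forall>t\<in>S. Mf D s0 K t \<ge> max (D t) 0" for K
  proof (induction K)
    case 0 then show ?case by simp
  next
    case (Suc K)
    show ?case
    proof
      fix t assume t: "t \<in> S"
      show "Mf D s0 (Suc K) t \<ge> max (D t) 0"
      proof (cases "t = s0")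
        case True then show ?thesis using D0 by simp
      next
        case False
        have sbM: "sb n Phi t (Mf D s0 K)" unfolding sb_def
        proof
          fix i assume i: "i \<in> {1..n}"
          show "\<exists>B. \<forall>x\<in>set_pmf (Phi t i). \<bar>Mf D s0 K (snd x)\<bar> \<le> B"
          proof (intro exI[of _ "\<bar>D t\<bar> + 1 + real K"] ballI)
            fix x assume x: "x \<in> set_pmf (Phi t i)"
            have xS: "snd x \<in> S" using closed t i x by blast
            have "(\<bar>D (snd x)\<bar> + real K) * Tl s0 K (snd x) \<le> (\<bar>D (snd x)\<bar> + real K)"
              using Tl_bnd[of s0 K "snd x"] by (intro mult_left_le) auto
            moreover have bb: "0 \<le> Mf D s0 K (snd x) \<and> Mf D s0 K (snd x) \<le> (\<bar>D (snd x)\<bar> + real K) * Tl s0 K (snd x)"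
              using b[of K] xS by blast
            ultimately have "Mf D s0 K (snd x) \<le> \<bar>D (snd x)\<bar> + real K" by linarith
            then show "\<bar>Mf D s0 K (snd x)\<bar> \<le> \<bar>D t\<bar> + 1 + real K"
              using bb Dsupp[OF t i x] by linarith
          qed
        qed
        have "P t D \<le> P t (\<lambda>s. max (D s) 0)"
          by (rule P_mono[OF sbD[OF t] sbDp[OF t]]) auto
        also have "\<dots> \<le> P t (Mf D s0 K)"
          by (rule P_mono[OF sbDp[OF t] sbM]) (use Suc closed t in blast)
        finally have 1: "D t \<le> P t (Mf D s0 K)" using drift t by fastforce
        have "0 \<le> P t (Mf D s0 K)" by (rule P_nonneg[OF sbM]) (use b closed t in blast)
        with 1 show ?thesis using False by simp
      qed
    qed
  qed
  define r where "r K = P s0 (Tl s0 K)" for K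
  define c0 where "c0 = lam i0 / tot"
  have c0: "c0 > 0" using pos up tot_pos by (simp add: c0_def)
  have low: "c0 \<le> real (K + 2) * r K" for K
  proof -
    have supp1: "\<bar>D (snd x)\<bar> = 1" if "i \<in> {1..n}" "x \<in> set_pmf (Phi s0 i)" for i x
      using pm1 s0 that D0 by fastforce
    have sbM: "sb n Phi s0 (Mf D s0 K)" unfolding sb_def
    proof
      fix i assume i: "i \<in> {1..n}"
      show "\<exists>B. \<forall>x\<in>set_pmf (Phi s0 i). \<bar>Mf D s0 K (snd x)\<bar> \<le> B"
      proof (intro exI[of _ "1 + real K"] ballI)
        fix x assume x: "x \<in> set_pmf (Phi s0 i)"
        have xS: "snd x \<in> S" using closed s0 i x by blast
        have "(\<bar>D (snd x)\<bar> + real K) * Tl s0 K (snd x) \<le> (\<bar>D (snd x)\<bar> + real K)"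
          using Tl_bnd[of s0 K "snd x"] by (intro mult_left_le) auto
        moreover have bb: "0 \<le> Mf D s0 K (snd x) \<and> Mf D s0 K (snd x) \<le> (\<bar>D (snd x)\<bar> + real K) * Tl s0 K (snd x)"
          using b[of K] xS by blast
        ultimately have "Mf D s0 K (snd x) \<le> 1 + real K" using supp1[OF i x] by linarith
        then show "\<bar>Mf D s0 K (snd x)\<bar> \<le> 1 + real K" using bb by simp
      qed
    qed
    have "c0 * 1 \<le> P s0 (\<lambda>s. max (D s) 0)" unfolding c0_def
      by (rule P_lower2[OF sbDp[OF s0] _ up(1)]) (use up(2) in auto)
    also have "\<dots> \<le> P s0 (Mf D s0 K)"
      by (rule P_mono[OF sbDp[OF s0] sbM]) (use a closed s0 in blast)
    also have "\<dots> \<le> P s0 (\<lambda>s. (1 + real K) * Tl s0 K s)"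
    proof (rule P_mono[OF sbM])
      show "sb n Phi s0 (\<lambda>s. (1 + real K) * Tl s0 K s)" by (intro sb_cmult sb_Tl)
      show "\<forall>i\<in>{1..n}. \<forall>x\<in>set_pmf (Phi s0 i). Mf D s0 K (snd x) \<le> (1 + real K) * Tl s0 K (snd x)"
      proof (intro ballI)
        fix i x assume i: "i \<in> {1..n}" and x: "x \<in> set_pmf (Phi s0 i)"
        have xS: "snd x \<in> S" using closed s0 i x by blast
        then have "Mf D s0 K (snd x) \<le> (\<bar>D (snd x)\<bar> + real K) * Tl s0 K (snd x)"
          using b[of K] by blast
        then show "Mf D s0 K (snd x) \<le> (1 + real K) * Tl s0 K (snd x)"
          using supp1[OF i x] by simp
      qed
    qed
    also have "\<dots> = (1 + real K) * r K" by (simp add: P_cmult r_def)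
    also have "\<dots> \<le> real (K + 2) * r K"
      using P_bnd01[of "Tl s0 K" s0] Tl_bnd unfolding r_def by (intro mult_right_mono) auto
    finally show ?thesis by simp
  qed
  have sums: "FR s0 sums 1" and summ: "summable (\<lambda>k. real k * FR s0 k)"
    using pr by (auto simp: positive_recurrent_def)
  have sFR: "summable (FR s0)" using sums by (rule sums_summable)
  have rK: "r K = (\<Sum>j. FR s0 (j + (K + 2)))" for K
  proof -
    have "r K = 1 - (\<Sum>k<K + 2. FR s0 k)" using FR_partial[of s0 K] by (simp add: r_def)
    also have "\<dots> = (\<Sum>j. FR s0 (j + (K + 2)))"
      using suminf_split_initial_segment[OF sFR, of "K+2"] sums_unique[OF sums] by simp
    finally show ?thesis .
  qed
  define g where "g k = real k * FR s0 k" for k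
  have tail0: "(\<lambda>K. suminf g - (\<Sum>k<K + 2. g k)) \<longlonglongrightarrow> 0"
  proof -
    have "g = (\<lambda>k. real k * FR s0 k)" by (rule ext) (simp add: g_def)
    then have "summable g" using summ by simp
    then have "(\<lambda>m. \<Sum>k<m. g k) \<longlonglongrightarrow> suminf g" by (rule summable_LIMSEQ)
    then have "(\<lambda>K. \<Sum>k<K + 2. g k) \<longlonglongrightarrow> suminf g" by (rule LIMSEQ_ignore_initial_segment)
    then show ?thesis using tendsto_diff[OF tendsto_const[of "suminf g"]] by fastforce
  qed
  have upb: "real (K + 2) * r K \<le> suminf g - (\<Sum>k<K + 2. g k)" for K
  proof -
    have "g = (\<lambda>k. real k * FR s0 k)" by (rule ext) (simp add: g_def)
    then have sg: "summable g" using summ by simp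
    have s1: "summable (\<lambda>j. real (K + 2) * FR s0 (j + (K + 2)))"
      by (intro summable_mult summable_ignore_initial_segment sFR)
    have s2: "summable (\<lambda>j. g (j + (K + 2)))" by (intro summable_ignore_initial_segment sg)
    have "real (K + 2) * r K = (\<Sum>j. real (K + 2) * FR s0 (j + (K + 2)))"
      unfolding rK by (rule suminf_mult[OF summable_ignore_initial_segment[OF sFR], symmetric])
    also have "\<dots> \<le> (\<Sum>j. g (j + (K + 2)))"
      by (rule suminf_le[OF _ s1 s2]) (auto simp: g_def intro!: mult_right_mono FR_nonneg)
    also have "\<dots> = suminf g - (\<Sum>k<K + 2. g k)"
      using suminf_split_initial_segment[OF sg, of "K+2"] by simp
    finally show ?thesis .
  qed
  have "\<forall>\<^sub>F K in sequentially. suminf g - (\<Sum>k<K + 2. g k) < c0"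
    using order_tendstoD(2)[OF tail0 c0] .
  then obtain K where "suminf g - (\<Sum>k<K + 2. g k) < c0" by (auto simp: eventually_sequentially)
  with low[of K] upb[of K] show False by linarith
qed


lemma P_le_b:
  assumes "sb n Phi t f" "\<forall>i\<in>{1..n}. \<forall>x\<in>set_pmf (Phi t i). f (snd x) \<le> b i"
  shows "P t f \<le> (\<Sum>i\<in>{1..n}. lam i / tot * b i)"
  unfolding Pexp_def
proof (rule sum_mono)
  fix i assume i: "i \<in> {1..n}"
  have "measure_pmf.expectation (Phi t i) (\<lambda>x. f (snd x)) \<le> measure_pmf.expectation (Phi t i) (\<lambda>x. b i)"
    using assms i by (intro integral_mono_AE) (auto simp: sb_intI AE_measure_pmf_iff)
  then have e: "measure_pmf.expectation (Phi t i) (\<lambda>x. f (snd x)) \<le> b i" by simp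
  have "lam i / tot \<ge> 0" using pos i tot_pos by (simp add: less_imp_le)
  then show "lam i / tot * measure_pmf.expectation (Phi t i) (\<lambda>x. f (snd x)) \<le> lam i / tot * b i"
    by (rule mult_left_mono[OF e])
qed

lemma P_ge_b:
  assumes "sb n Phi t f" "\<forall>i\<in>{1..n}. \<forall>x\<in>set_pmf (Phi t i). f (snd x) \<ge> b i"
  shows "P t f \<ge> (\<Sum>i\<in>{1..n}. lam i / tot * b i)"
  unfolding Pexp_def
proof (rule sum_mono)
  fix i assume i: "i \<in> {1..n}"
  have "measure_pmf.expectation (Phi t i) (\<lambda>x. f (snd x)) \<ge> measure_pmf.expectation (Phi t i) (\<lambda>x. b i)"
    using assms i by (intro integral_mono_AE) (auto simp: sb_intI AE_measure_pmf_iff)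
  then have e: "measure_pmf.expectation (Phi t i) (\<lambda>x. f (snd x)) \<ge> b i" by simp
  have "lam i / tot \<ge> 0" using pos i tot_pos by (simp add: less_imp_le)
  then show "lam i / tot * measure_pmf.expectation (Phi t i) (\<lambda>x. f (snd x)) \<ge> lam i / tot * b i"
    by (rule mult_left_mono[OF e])
qed

lemma sum_pm:
  assumes "N \<subseteq> {1..n}"
  shows "(\<Sum>i\<in>{1..n}. lam i / tot * (c + (if i \<in> N then -1 else 1))) = c + (tot - 2 * (\<Sum>i\<in>N. lam i)) / tot"
proof -
  have "(\<Sum>i\<in>{1..n}. lam i / tot * (c + (if i \<in> N then -1 else 1)))
      = (\<Sum>i\<in>{1..n}. lam i) / tot * c + (\<Sum>i\<in>{1..n}. lam i - 2 * (if i \<in> N then lam i else 0)) / tot"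
  proof -
    have "(\<Sum>i\<in>{1..n}. lam i / tot * (c + (if i \<in> N then -1 else 1)))
       = (\<Sum>i\<in>{1..n}. lam i / tot * c + (lam i - 2 * (if i \<in> N then lam i else 0)) / tot)"
      using tot_pos by (intro sum.cong refl) (auto simp: field_simps)
    also have "\<dots> = (\<Sum>i\<in>{1..n}. lam i / tot * c) + (\<Sum>i\<in>{1..n}. (lam i - 2 * (if i \<in> N then lam i else 0)) / tot)"
      by (rule sum.distrib)
    also have "\<dots> = (\<Sum>i\<in>{1..n}. lam i) / tot * c + (\<Sum>i\<in>{1..n}. lam i - 2 * (if i \<in> N then lam i else 0)) / tot"
      by (simp only: sum_distrib_right sum_divide_distrib)
    finally show ?thesis .
  qed
  also have "(\<Sum>i\<in>{1..n}. lam i - 2 * (if i \<in> N then lam i else 0)) = tot - 2 * (\<Sum>i\<in>N. lam i)"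
  proof -
    have "(\<Sum>i\<in>{1..n}. (if i \<in> N then lam i else 0)) = (\<Sum>i\<in>{1..n} \<inter> N. lam i)"
      by (simp add: sum.inter_restrict)
    also have "{1..n} \<inter> N = N" using assms by auto
    finally show ?thesis by (simp add: sum_subtractf sum_distrib_left[symmetric])
  qed
  finally show ?thesis using tot_pos by simp
qed

end

lemma sum_upd:
  assumes "finite F" "k \<in> F"
  shows "(\<Sum>j\<in>F. c j * real ((f(k := v)) j)) = (\<Sum>j\<in>F. c j * real (f j)) + c k * (real v - real (f k))"
proof -
  have "(\<Sum>j\<in>F. c j * real ((f(k := v)) j)) = c k * real v + (\<Sum>j\<in>F - {k}. c j * real (f j))"
    using assms by (simp add: sum.remove)
  moreover have "(\<Sum>j\<in>F. c j * real (f j)) = c k * real (f k) + (\<Sum>j\<in>F - {k}. c j * real (f j))"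
    using assms by (simp add: sum.remove)
  ultimately show ?thesis by (simp add: algebra_simps)
qed

lemma nbrs_range:
  assumes "simple_graph n E" "k \<in> nbrs E i"
  shows "k \<in> {1..n} \<and> i \<in> {1..n} \<and> k \<noteq> i"
proof -
  from assms obtain a b where "{i, k} = {a, b}" "a \<noteq> b" "a \<in> {1..n}" "b \<in> {1..n}"
    unfolding simple_graph_def nbrs_def by blast
  then show ?thesis by (auto simp: doubleton_eq_iff)
qed

lemma no_loop: "simple_graph n E \<Longrightarrow> {i, i} \<notin> E"
  unfolding simple_graph_def by auto

locale pol = mc n lam Phi for n lam and Phi :: "'s \<Rightarrow> nat \<Rightarrow> (nat option \<times> 's) pmf" +
  fixes E S q s0
  assumes graph: "simple_graph n E" and ad: "adapted_policy n E lam S q s0 Phi"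
begin

lemma s0S: "s0 \<in> S" using ad by (simp add: adapted_policy_def)

lemma closed: "\<forall>t\<in>S. \<forall>i\<in>{1..n}. \<forall>x\<in>set_pmf (Phi t i). snd x \<in> S"
  using ad unfolding adapted_policy_def by fastforce

lemma q0: "i \<in> {1..n} \<Longrightarrow> q s0 i = 0"
  using ad s0S unfolding adapted_policy_def by blast

lemma empty_iff: assumes "t \<in> S" shows "(\<forall>i\<in>{1..n}. q t i = 0) \<longleftrightarrow> t = s0"
proof -
  from ad have "\<forall>s\<in>S. (\<forall>i\<in>{1..n}. q s i = 0) \<longleftrightarrow> s = s0" by (simp add: adapted_policy_def)
  from bspec[OF this assms] show ?thesis .
qed

lemma trans_info:
  assumes "t \<in> S" "i \<in> {1..n}" "(j, t') \<in> set_pmf (Phi t i)"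
  shows "case j of None \<Rightarrow> q t' = (q t)(i := q t i + 1)
           | Some k \<Rightarrow> k \<in> nbrs E i \<and> q t k > 0 \<and> q t' = (q t)(k := q t k - 1)"
  using ad assms unfolding adapted_policy_def by fastforce

definition lin :: "(nat \<Rightarrow> real) \<Rightarrow> 's \<Rightarrow> real" where
  "lin c t = (\<Sum>j\<in>{1..n}. c j * real (q t j))"

lemma lin_step:
  assumes "t \<in> S" "i \<in> {1..n}" "x \<in> set_pmf (Phi t i)"
  shows "(fst x = None \<and> lin c (snd x) = lin c t + c i) \<or>
         (\<exists>k. fst x = Some k \<and> k \<in> nbrs E i \<and> k \<in> {1..n} \<and> lin c (snd x) = lin c t - c k)"
proof (cases x)
  case (Pair j t')
  have ti: "case j of None \<Rightarrow> q t' = (q t)(i := q t i + 1)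
           | Some k \<Rightarrow> k \<in> nbrs E i \<and> q t k > 0 \<and> q t' = (q t)(k := q t k - 1)"
    using trans_info assms Pair by blast
  show ?thesis
  proof (cases j)
    case None
    then have qt: "q t' = (q t)(i := q t i + 1)" using ti by simp
    have "lin c t' = lin c t + c i" unfolding lin_def qt using assms(2)
      by (subst sum_upd) auto
    then show ?thesis using None Pair by simp
  next
    case (Some k)
    then have k: "k \<in> nbrs E i" "q t k > 0" "q t' = (q t)(k := q t k - 1)" using ti by auto
    have kr: "k \<in> {1..n}" using nbrs_range[OF graph k(1)] by blast
    have "lin c t' = lin c t - c k" unfolding lin_def k(3) using kr k(2)
      by (subst sum_upd) (auto simp: of_nat_diff algebra_simps)
    then show ?thesis using Some Pair k kr by simp
  qed
qed


lemma reach: "t \<in> S \<Longrightarrow> (s0, t) \<in> (Restr (step n lam Phi) S)\<^sup>*"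
  using ad s0S unfolding adapted_policy_def by blast

lemma reach': "t \<in> S \<Longrightarrow> (s0, t) \<in> (step n lam Phi)\<^sup>*"
  using reach rtrancl_mono[of "Restr (step n lam Phi) S" "step n lam Phi"] by blast

definition indp :: "'s \<Rightarrow> bool" where
  "indp t \<longleftrightarrow> (\<forall>x\<in>{1..n}. \<forall>y\<in>{1..n}. 0 < q t x \<longrightarrow> 0 < q t y \<longrightarrow> {x, y} \<notin> E)"

lemma inv:
  assumes gr: "greedy n E S q Phi" and t: "t \<in> S"
  shows "indp t"
  using reach[OF t]
proof (induction rule: rtrancl_induct)
  case base then show ?case using q0 by (simp add: indp_def)
next
  case (step u t)
  then have uS: "u \<in> S" and tS: "t \<in> S" by auto
  from step(2) obtain i j where i: "i \<in> {1..n}" and pj: "pmf (Phi u i) (j, t) > 0"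
    by (auto simp: step_def)
  then have jt: "(j, t) \<in> set_pmf (Phi u i)" by (simp add: set_pmf_iff)
  have ti: "case j of None \<Rightarrow> q t = (q u)(i := q u i + 1)
           | Some k \<Rightarrow> k \<in> nbrs E i \<and> q u k > 0 \<and> q t = (q u)(k := q u k - 1)"
    using trans_info[OF uS i jt] .
  show ?case
  proof (cases j)
    case None
    then have qt: "q t = (q u)(i := q u i + 1)" using ti by simp
    have gz: "\<forall>k\<in>nbrs E i. q u k = 0" using gr uS i jt None unfolding greedy_def by fastforce
    show ?thesis unfolding indp_def
    proof (intro ballI impI)
      fix x y assume x: "x \<in> {1..n}" and y: "y \<in> {1..n}" and qx: "0 < q t x" and qy: "0 < q t y"
      show "{x, y} \<notin> E"
      proof (cases "x = i"; cases "y = i")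
        assume "x = i" "y = i" then show ?thesis using no_loop[OF graph] by simp
      next
        assume xi: "x = i" and yi: "y \<noteq> i"
        then have "q u y > 0" using qy qt by simp
        then have "y \<notin> nbrs E i" using gz by auto
        then show ?thesis using xi by (simp add: nbrs_def)
      next
        assume xi: "x \<noteq> i" and yi: "y = i"
        then have "q u x > 0" using qx qt by simp
        then have "x \<notin> nbrs E i" using gz by auto
        then show ?thesis using yi by (simp add: nbrs_def insert_commute)
      next
        assume xi: "x \<noteq> i" and yi: "y \<noteq> i"
        then have "q u x > 0" "q u y > 0" using qx qy qt by auto
        then show ?thesis using step(3) x y by (simp add: indp_def)
      qed
    qed
  next
    case (Some k)
    then have qt: "q t = (q u)(k := q u k - 1)" using ti by simp
    have "0 < q t x \<Longrightarrow> 0 < q u x" for x using qt by (cases "x = k") auto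
    then show ?thesis using step(3) unfolding indp_def by blast
  qed
qed

abbreviation "Q \<equiv> lin (\<lambda>_. 1)"

lemma Q_nn: "Q t \<ge> 0" unfolding lin_def by (intro sum_nonneg) auto

lemma lin_supp:
  assumes "t \<in> S" "i \<in> {1..n}" "x \<in> set_pmf (Phi t i)" "\<forall>j\<in>{1..n}. \<bar>c j\<bar> \<le> 1"
  shows "\<bar>lin c (snd x)\<bar> \<le> \<bar>lin c t\<bar> + 1"
proof -
  have "\<bar>lin c (snd x) - lin c t\<bar> \<le> 1"
    using lin_step[OF assms(1-3), of c] assms(2,4) by auto
  then show ?thesis by linarith
qed

lemma sb_lin: "t \<in> S \<Longrightarrow> \<forall>j\<in>{1..n}. \<bar>c j\<bar> \<le> 1 \<Longrightarrow> sb n Phi t (lin c)"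
  unfolding sb_def using lin_supp by blast

definition delta :: real where
  "delta = Min ((\<lambda>I. (2 * (\<Sum>i\<in>nbr_set E I. lam i) - tot) / tot) ` {I. independent_set n E I} \<union> {1})"

lemma delta:
  assumes C: "condC n E lam"
  shows "delta > 0" "\<And>I. independent_set n E I \<Longrightarrow> (2 * (\<Sum>i\<in>nbr_set E I. lam i) - tot) / tot \<ge> delta"
proof -
  have fin: "finite {I. independent_set n E I}"
    by (rule finite_subset[of _ "Pow {1..n}"]) (auto simp: independent_set_def)
  let ?M = "(\<lambda>I. (2 * (\<Sum>i\<in>nbr_set E I. lam i) - tot) / tot) ` {I. independent_set n E I} \<union> {1}"
  have finM: "finite ?M" using fin by simp
  have "\<forall>m\<in>?M. m > 0"
  proof
    fix m assume "m \<in> ?M"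
    then show "m > 0"
    proof
      assume "m \<in> (\<lambda>I. (2 * (\<Sum>i\<in>nbr_set E I. lam i) - tot) / tot) ` {I. independent_set n E I}"
      then obtain I where I: "independent_set n E I" and m: "m = (2 * (\<Sum>i\<in>nbr_set E I. lam i) - tot) / tot"
        by blast
      have "(\<Sum>i\<in>nbr_set E I. lam i) > tot / 2" using C I unfolding condC_def by blast
      then show "m > 0" unfolding m using tot_pos by (intro divide_pos_pos) auto
    qed simp
  qed
  then show "delta > 0" unfolding delta_def using finM by (subst Min_gr_iff) auto
  fix I assume "independent_set n E I"
  then show "(2 * (\<Sum>i\<in>nbr_set E I. lam i) - tot) / tot \<ge> delta"
    unfolding delta_def using finM by (intro Min_le) auto
qed

lemma Q_drift:
  assumes gr: "greedy n E S q Phi" and C: "condC n E lam" and t: "t \<in> S" and ts0: "t \<noteq> s0"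
  shows "P t Q \<le> Q t - delta"
proof -
  define A where "A = {x\<in>{1..n}. 0 < q t x}"
  have "A \<noteq> {}" using empty_iff[OF t] ts0 by (auto simp: A_def)
  then have indA: "independent_set n E A"
    using inv[OF gr t] unfolding independent_set_def indp_def A_def by blast
  define N where "N = nbr_set E A"
  have Nsub: "N \<subseteq> {1..n}" unfolding N_def nbr_set_def using nbrs_range[OF graph] by blast
  have "P t Q \<le> (\<Sum>i\<in>{1..n}. lam i / tot * (Q t + (if i \<in> N then -1 else 1)))"
  proof (rule P_le_b)
    show "sb n Phi t Q" using sb_lin[OF t] by simp
    show "\<forall>i\<in>{1..n}. \<forall>x\<in>set_pmf (Phi t i). Q (snd x) \<le> Q t + (if i \<in> N then -1 else 1)"
    proof (intro ballI)
      fix i x assume i: "i \<in> {1..n}" and x: "x \<in> set_pmf (Phi t i)"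
      from lin_step[OF t i x, of "\<lambda>_. 1"]
      show "Q (snd x) \<le> Q t + (if i \<in> N then -1 else 1)"
      proof
        assume a: "fst x = None \<and> Q (snd x) = Q t + 1"
        have "i \<notin> N"
        proof
          assume "i \<in> N"
          then obtain y where y: "y \<in> A" "i \<in> nbrs E y" unfolding N_def nbr_set_def by blast
          then have "y \<in> nbrs E i" by (simp add: nbrs_def insert_commute)
          moreover have "\<forall>k\<in>nbrs E i. q t k = 0"
            using gr t i x a unfolding greedy_def by (cases x) fastforce
          ultimately show False using y(1) by (auto simp: A_def)
        qed
        then show ?thesis using a by simp
      qed auto
    qed
  qed
  also have "\<dots> = Q t + (tot - 2 * (\<Sum>i\<in>N. lam i)) / tot" by (rule sum_pm[OF Nsub])
  also have "\<dots> \<le> Q t - delta"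
  proof -
    have "(2 * (\<Sum>i\<in>N. lam i) - tot) / tot \<ge> delta" using delta(2)[OF C indA] by (simp add: N_def)
    moreover have "(tot - 2 * (\<Sum>i\<in>N. lam i)) / tot = - ((2 * (\<Sum>i\<in>N. lam i) - tot) / tot)"
      by (simp only: minus_divide_left minus_diff_eq)
    ultimately show ?thesis by linarith
  qed
  finally show ?thesis .
qed

lemma greedy_stable:
  assumes gr: "greedy n E S q Phi" and C: "condC n E lam"
  shows "stable n lam S Phi"
proof -
  define V where "V s = Q s / delta" for s
  have dp: "delta > 0" using delta(1)[OF C] .
  have Veq: "V = (\<lambda>s. (1 / delta) * Q s)" by (rule ext) (simp add: V_def)
  have Vnn: "\<forall>t\<in>S. V t \<ge> 0" using Q_nn dp by (simp add: V_def)
  have sbV: "\<forall>t\<in>S. sb n Phi t V"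
  proof
    fix t assume "t \<in> S"
    then have "sb n Phi t (\<lambda>s. (1 / delta) * Q s)" by (intro sb_cmult sb_lin) auto
    moreover have "V = (\<lambda>s. (1 / delta) * Q s)" by (rule ext) (simp add: V_def)
    ultimately show "sb n Phi t V" by simp
  qed
  have drift: "\<forall>t\<in>S. t \<noteq> s0 \<longrightarrow> P t V \<le> V t - 1"
  proof (intro ballI impI)
    fix t assume t: "t \<in> S" and ts0: "t \<noteq> s0"
    have "P t V = (1 / delta) * P t Q"
      unfolding Veq by (rule P_cmult)
    also have "\<dots> \<le> (1 / delta) * (Q t - delta)"
      using Q_drift[OF gr C t ts0] dp by (intro mult_left_mono) auto
    also have "\<dots> = V t - 1" using dp by (simp add: V_def field_simps)
    finally show "P t V \<le> V t - 1" .
  qed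
  show ?thesis unfolding stable_def
  proof
    fix a assume aS: "a \<in> S"
    show "positive_recurrent n lam Phi a"
    proof (cases "a = s0")
      case True
      then show ?thesis using pr_s0[OF closed Vnn sbV drift s0S] by simp
    next
      case False
      show ?thesis using pr_other[OF closed Vnn sbV drift s0S aS False reach'[OF aS]] .
    qed
  qed
qed

lemma not_stable_A:
  assumes Asub: "A \<subseteq> {1..n}" and Aind: "\<forall>x\<in>A. \<forall>y\<in>A. {x, y} \<notin> E"
    and i0: "i0 \<in> A" and big: "(\<Sum>i\<in>A. lam i) \<ge> tot / 2"
  shows "\<not> stable n lam S Phi"
proof -
  define c where "c i = (if i \<in> A then 1 else - 1 :: real)" for i
  let ?D = "lin c"
  have cb: "\<forall>j\<in>{1..n}. \<bar>c j\<bar> \<le> 1" by (simp add: c_def)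
  have D0: "?D s0 = 0" unfolding lin_def using q0 by simp
  have pm1: "\<forall>t\<in>S. \<forall>i\<in>{1..n}. \<forall>x\<in>set_pmf (Phi t i). ?D (snd x) = ?D t + 1 \<or> ?D (snd x) = ?D t - 1"
  proof (intro ballI)
    fix t i x assume t: "t \<in> S" and i: "i \<in> {1..n}" and x: "x \<in> set_pmf (Phi t i)"
    from lin_step[OF t i x, of c] show "?D (snd x) = ?D t + 1 \<or> ?D (snd x) = ?D t - 1"
      by (auto simp: c_def split: if_splits)
  qed
  have upA: "?D (snd x) = ?D t + 1" if t: "t \<in> S" and i: "i \<in> A" and x: "x \<in> set_pmf (Phi t i)" for t i x
  proof -
    have i': "i \<in> {1..n}" using i Asub by blast
    from lin_step[OF t i' x, of c] show ?thesis
    proof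
      assume "fst x = None \<and> ?D (snd x) = ?D t + c i"
      then show ?thesis using i by (simp add: c_def)
    next
      assume "\<exists>k. fst x = Some k \<and> k \<in> nbrs E i \<and> k \<in> {1..n} \<and> ?D (snd x) = ?D t - c k"
      then obtain k where k: "k \<in> nbrs E i" "?D (snd x) = ?D t - c k" by blast
      have "k \<notin> A" using k(1) Aind i by (auto simp: nbrs_def)
      then show ?thesis using k by (simp add: c_def)
    qed
  qed
  have drift: "\<forall>t\<in>S. P t ?D \<ge> ?D t"
  proof
    fix t assume t: "t \<in> S"
    let ?N = "{1..n} - A"
    have "P t ?D \<ge> (\<Sum>i\<in>{1..n}. lam i / tot * (?D t + (if i \<in> ?N then -1 else 1)))"
    proof (rule P_ge_b)
      show "sb n Phi t ?D" using sb_lin[OF t cb] .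
      show "\<forall>i\<in>{1..n}. \<forall>x\<in>set_pmf (Phi t i). ?D (snd x) \<ge> ?D t + (if i \<in> ?N then -1 else 1)"
      proof (intro ballI)
        fix i x assume i: "i \<in> {1..n}" and x: "x \<in> set_pmf (Phi t i)"
        show "?D (snd x) \<ge> ?D t + (if i \<in> ?N then -1 else 1)"
        proof (cases "i \<in> A")
          case True then show ?thesis using upA[OF t True x] by simp
        next
          case False then show ?thesis using pm1 t i x by fastforce
        qed
      qed
    qed
    also have "(\<Sum>i\<in>{1..n}. lam i / tot * (?D t + (if i \<in> ?N then -1 else 1))) = ?D t + (tot - 2 * (\<Sum>i\<in>?N. lam i)) / tot"
      by (rule sum_pm) auto
    finally have 1: "P t ?D \<ge> ?D t + (tot - 2 * (\<Sum>i\<in>?N. lam i)) / tot" .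
    have "(\<Sum>i\<in>?N. lam i) = tot - (\<Sum>i\<in>A. lam i)"
      using Asub by (simp add: sum_diff)
    then have "(tot - 2 * (\<Sum>i\<in>?N. lam i)) / tot \<ge> 0" using big tot_pos by simp
    with 1 show "P t ?D \<ge> ?D t" by linarith
  qed
  have up: "\<forall>x\<in>set_pmf (Phi s0 i0). ?D (snd x) = 1" using upA[OF s0S i0] D0 by simp
  have "\<not> positive_recurrent n lam Phi s0"
    by (rule not_pr[OF closed s0S D0 pm1 drift _ up]) (use i0 Asub in blast)
  then show ?thesis using s0S unfolding stable_def by blast
qed


lemma condC_of_not_stable:
  assumes st: "stable n lam S Phi"
    and pw: "\<forall>I. independent_set n E I \<longrightarrow> (\<forall>x\<in>{1..n} - nbr_set E I. \<forall>y\<in>{1..n} - nbr_set E I. {x, y} \<notin> E)"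
  shows "condC n E lam"
  unfolding condC_def
proof (intro allI impI, rule ccontr)
  fix I assume I: "independent_set n E I" and nc: "\<not> (\<Sum>i\<in>nbr_set E I. lam i) > tot / 2"
  define A where "A = {1..n} - nbr_set E I"
  obtain k where k: "k \<in> I" using I unfolding independent_set_def by blast
  have kA: "k \<in> A"
  proof -
    have "k \<in> {1..n}" using I k unfolding independent_set_def by blast
    moreover have "k \<notin> nbr_set E I"
    proof
      assume "k \<in> nbr_set E I"
      then obtain y where "y \<in> I" "{y, k} \<in> E" unfolding nbr_set_def nbrs_def by blast
      then show False using I k unfolding independent_set_def by blast
    qed
    ultimately show ?thesis by (simp add: A_def)
  qed
  have Nsub: "nbr_set E I \<subseteq> {1..n}" unfolding nbr_set_def using nbrs_range[OF graph] by blast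
  have "(\<Sum>i\<in>A. lam i) = tot - (\<Sum>i\<in>nbr_set E I. lam i)"
    unfolding A_def using Nsub by (simp add: sum_diff)
  then have big: "(\<Sum>i\<in>A. lam i) \<ge> tot / 2" using nc by linarith
  have "\<not> stable n lam S Phi"
    by (rule not_stable_A[OF _ _ kA big]) (use pw I in \<open>auto simp: A_def\<close>)
  then show False using st by blast
qed

end

lemma pw_sub: "A \<subseteq> B \<Longrightarrow> \<forall>x\<in>B. \<forall>y\<in>B. {x, y} \<notin> E \<Longrightarrow> \<forall>x\<in>A. \<forall>y\<in>A. {x, y} \<notin> E"
  by blast

lemma pw_complete:
  assumes "complete_graph n E" "simple_graph n E" "independent_set n E I"
  shows "\<forall>x\<in>{1..n} - nbr_set E I. \<forall>y\<in>{1..n} - nbr_set E I. {x, y} \<notin> E"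
proof -
  obtain k where k: "k \<in> I" using assms(3) unfolding independent_set_def by blast
  have kr: "k \<in> {1..n}" using assms(3) k unfolding independent_set_def by blast
  have "{1..n} - nbr_set E I \<subseteq> {k}"
  proof
    fix j assume j: "j \<in> {1..n} - nbr_set E I"
    show "j \<in> {k}"
    proof (rule ccontr)
      assume "j \<notin> {k}"
      then have "{k, j} \<in> E" using assms(1) kr j unfolding complete_graph_def by auto
      then have "j \<in> nbr_set E I" using k unfolding nbr_set_def nbrs_def by blast
      then show False using j by blast
    qed
  qed
  moreover have "\<forall>x\<in>{k}. \<forall>y\<in>{k}. {x, y} \<notin> E" using no_loop[OF assms(2)] by simp
  ultimately show ?thesis by (rule pw_sub)
qed

lemma pw_diamond:
  assumes "diamond_graph n E" "independent_set n E I"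
  shows "\<forall>x\<in>{1..n} - nbr_set E I. \<forall>y\<in>{1..n} - nbr_set E I. {x, y} \<notin> E"
proof -
  have n: "n = 4" and E: "E = {{1,2},{1,3},{2,3},{2,4},{3,4}}" using assms(1) by (auto simp: diamond_graph_def)
  obtain k where k: "k \<in> I" using assms(2) unfolding independent_set_def by blast
  have kr: "k \<in> {1..4}" using assms(2) k n unfolding independent_set_def by blast
  have sub: "nbrs E k \<subseteq> nbr_set E I" using k unfolding nbr_set_def by blast
  have set4: "{1..4::nat} = {1,2,3,4}" by auto
  have "k = 1 \<or> k = 2 \<or> k = 3 \<or> k = 4" using kr by auto
  then show ?thesis
  proof (elim disjE)
    assume "k = 1"
    then have "{2,3} \<subseteq> nbr_set E I" using sub by (auto simp: E nbrs_def insert_commute)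
    then have "{1..n} - nbr_set E I \<subseteq> {1,4}" using n set4 by auto
    moreover have "\<forall>x\<in>{1,4}. \<forall>y\<in>{1,4}. {x, y} \<notin> E" by (auto simp: E doubleton_eq_iff)
    ultimately show ?thesis by (rule pw_sub)
  next
    assume "k = 4"
    then have "{2,3} \<subseteq> nbr_set E I" using sub by (auto simp: E nbrs_def insert_commute)
    then have "{1..n} - nbr_set E I \<subseteq> {1,4}" using n set4 by auto
    moreover have "\<forall>x\<in>{1,4}. \<forall>y\<in>{1,4}. {x, y} \<notin> E" by (auto simp: E doubleton_eq_iff)
    ultimately show ?thesis by (rule pw_sub)
  next
    assume "k = 2"
    then have "{1,3,4} \<subseteq> nbr_set E I" using sub by (auto simp: E nbrs_def insert_commute)
    then have "{1..n} - nbr_set E I \<subseteq> {2}" using n set4 by auto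
    moreover have "\<forall>x\<in>{2}. \<forall>y\<in>{2}. {x, y} \<notin> E" by (auto simp: E doubleton_eq_iff)
    ultimately show ?thesis by (rule pw_sub)
  next
    assume "k = 3"
    then have "{1,2,4} \<subseteq> nbr_set E I" using sub by (auto simp: E nbrs_def insert_commute)
    then have "{1..n} - nbr_set E I \<subseteq> {3}" using n set4 by auto
    moreover have "\<forall>x\<in>{3}. \<forall>y\<in>{3}. {x, y} \<notin> E" by (auto simp: E doubleton_eq_iff)
    ultimately show ?thesis by (rule pw_sub)
  qed
qed

lemma nbrs_sub: "simple_graph n E \<Longrightarrow> nbrs E i \<subseteq> {1..n} - {i}"
  using nbrs_range by fastforce

lemma single_indep: "simple_graph n E \<Longrightarrow> i \<in> {1..n} \<Longrightarrow> independent_set n E {i}"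
  unfolding independent_set_def using no_loop by auto

lemma nbr_set_single: "nbr_set E {i} = nbrs E i"
  by (simp add: nbr_set_def)

lemma condC_single:
  assumes "condC n E lam" "simple_graph n E" "i \<in> {1..n}"
  shows "(\<Sum>k\<in>nbrs E i. lam k) > (\<Sum>k\<in>{1..n}. lam k) / 2"
proof -
  have "(\<Sum>k\<in>nbr_set E {i}. lam k) > (\<Sum>k\<in>{1..n}. lam k) / 2"
    using assms single_indep[OF assms(2,3)] unfolding condC_def by blast
  then show ?thesis by (simp add: nbr_set_single)
qed

lemma deg1_notC:
  assumes graph: "simple_graph n E" and pos: "\<forall>i\<in>{1..n}. lam i > 0"
    and i: "i \<in> {1..n}" and d: "degree n E i = 1"
  shows "\<not> condC n E lam"
proof
  assume C: "condC n E lam"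
  let ?tot = "\<Sum>k\<in>{1..n}. lam k"
  obtain j where j: "{j \<in> {1..n}. {i, j} \<in> E} = {j}" using d unfolding degree_def by (auto simp: card_Suc_eq)
  have nb: "nbrs E i = {j}" using j nbrs_range[OF graph, of _ i] unfolding nbrs_def by blast
  have jr: "j \<in> {1..n}" using j by blast
  have "lam j > ?tot / 2" using condC_single[OF C graph i] nb by simp
  moreover have "(\<Sum>k\<in>nbrs E j. lam k) > ?tot / 2" using condC_single[OF C graph jr] .
  moreover have "(\<Sum>k\<in>nbrs E j. lam k) \<le> (\<Sum>k\<in>{1..n} - {j}. lam k)"
    by (rule sum_mono2) (use nbrs_sub[OF graph] pos in \<open>auto simp: less_imp_le\<close>)
  moreover have "(\<Sum>k\<in>{1..n} - {j}. lam k) = ?tot - lam j" using jr by (simp add: sum_diff1)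
  ultimately show False by linarith
qed

lemma walk2: "{u, w} \<in> E \<Longrightarrow> {w, v} \<in> E \<Longrightarrow> walk E u v 2"
  unfolding walk_def
  by (rule exI[of _ "\<lambda>m. if m = 0 then u else if m = 1 then w else v"]) (auto simp: less_2_cases_iff)

lemma diam_notC:
  assumes graph: "simple_graph n E" and pos: "\<forall>i\<in>{1..n}. lam i > 0"
    and d: "diameter n E \<ge> 3"
  shows "\<not> condC n E lam"
proof
  assume C: "condC n E lam"
  let ?tot = "\<Sum>k\<in>{1..n}. lam k"
  have "(2::enat) < diameter n E" using d by (rule less_le_trans[rotated]) (simp add: numeral_eq_enat)
  then obtain u v where u: "u \<in> {1..n}" and v: "v \<in> {1..n}" and g: "2 < gdist E u v"
    unfolding diameter_def by (auto simp: less_SUP_iff)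
  have disj: "nbrs E u \<inter> nbrs E v = {}"
  proof (rule ccontr)
    assume "nbrs E u \<inter> nbrs E v \<noteq> {}"
    then obtain w where "{u, w} \<in> E" "{v, w} \<in> E" unfolding nbrs_def by blast
    then have "walk E u v 2" by (intro walk2) (auto simp: insert_commute)
    then have "gdist E u v \<le> enat 2" unfolding gdist_def by (intro INF_lower2[of 2]) auto
    with g show False by (simp add: numeral_eq_enat)
  qed
  have "(\<Sum>k\<in>nbrs E u. lam k) > ?tot / 2" using condC_single[OF C graph u] .
  moreover have "(\<Sum>k\<in>nbrs E v. lam k) > ?tot / 2" using condC_single[OF C graph v] .
  moreover have "(\<Sum>k\<in>nbrs E u \<union> nbrs E v. lam k) = (\<Sum>k\<in>nbrs E u. lam k) + (\<Sum>k\<in>nbrs E v. lam k)"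
  proof (rule sum.union_disjoint)
    show "finite (nbrs E u)" using nbrs_sub[OF graph] finite_subset by (metis finite_Diff finite_atLeastAtMost)
    show "finite (nbrs E v)" using nbrs_sub[OF graph] finite_subset by (metis finite_Diff finite_atLeastAtMost)
  qed (use disj in auto)
  moreover have "(\<Sum>k\<in>nbrs E u \<union> nbrs E v. lam k) \<le> ?tot"
    by (rule sum_mono2) (use nbrs_sub[OF graph] pos in \<open>auto simp: less_imp_le\<close>)
  ultimately show False by linarith
qed

theorem corollaryA2:
  fixes n :: nat and E :: "nat set set" and lam :: "nat \<Rightarrow> real"
  assumes graph: "simple_graph n E"
    and pos: "\<forall>i\<in>{1..n}. lam i > 0"
  shows "(((complete_graph n E \<and> n \<ge> 3) \<or> diamond_graph n E) \<longrightarrow>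
           (stabilizable n E lam \<longrightarrow>
              condC n E lam \<and>
              (\<forall>(S :: 's set) q s0 Phi. adapted_policy n E lam S q s0 Phi \<and> greedy n E S q Phi
                  \<longrightarrow> stable n lam S Phi))) \<and>
         ((diameter n E \<ge> 3 \<or> (\<exists>i\<in>{1..n}. degree n E i = 1)) \<longrightarrow> \<not> condC n E lam)"
proof (intro conjI impI)
  assume G: "(complete_graph n E \<and> n \<ge> 3) \<or> diamond_graph n E" and st: "stabilizable n E lam"
  have n1: "n \<ge> 1" using G by (auto simp: diamond_graph_def)
  have pw: "\<forall>I. independent_set n E I \<longrightarrow> (\<forall>x\<in>{1..n} - nbr_set E I. \<forall>y\<in>{1..n} - nbr_set E I. {x, y} \<notin> E)"
    using G pw_complete[OF _ graph] pw_diamond by blast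
  from st obtain S :: "nat set" and q s0 Phi where ad: "adapted_policy n E lam S q s0 Phi" and sS: "stable n lam S Phi"
    unfolding stabilizable_def by blast
  interpret pol n lam Phi E S q s0 by unfold_locales (use pos n1 graph ad in auto)
  show C: "condC n E lam" by (rule condC_of_not_stable[OF sS pw])
  show "\<forall>(S :: 's set) q s0 Phi. adapted_policy n E lam S q s0 Phi \<and> greedy n E S q Phi \<longrightarrow> stable n lam S Phi"
  proof (intro allI impI)
    fix S' :: "'s set" and q' s0' Phi'
    assume a: "adapted_policy n E lam S' q' s0' Phi' \<and> greedy n E S' q' Phi'"
    interpret p2: pol n lam Phi' E S' q' s0' by unfold_locales (use pos n1 graph a in auto)
    show "stable n lam S' Phi'" by (rule p2.greedy_stable) (use a C in auto)
  qed
next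
  assume "diameter n E \<ge> 3 \<or> (\<exists>i\<in>{1..n}. degree n E i = 1)"
  then show "\<not> condC n E lam" using diam_notC[OF graph pos] deg1_notC[OF graph pos] by blast
qed

end
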